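(* Let $\alpha>2$, $\theta_c>0$, $\overline{Q}>0$, $0<\lambda_b^{\min}\le\lambda_b\le\lambda_b^{\max}$, $\lambda_d>0$, $\rho\in(0,1)$, $\eta_a\in(0,1]$, and $\nu>-\frac{2}{\alpha}$. For a random distance $\|X\|$ with $\|X\|^2$ exponentially distributed with rate $\pi\lambda_b$, define the transmit power $$Q(\|X\|)=\frac{\overline{Q}\|X\|^{\alpha\nu}}{\Gamma(1+\frac{\alpha\nu}{2})}\Big[(\pi\lambda_b^{\min})^{\frac{\alpha\nu}{2}}\mathbb{1}(\nu\ge0)+(\pi\lambda_b^{\max})^{\frac{\alpha\nu}{2}}\mathbb{1}(-\tfrac{2}{\alpha}<\nu<0)\Big].$$ Consider a receiver at the origin and a desired transmitter at distance $\|X_1\|$ with $\|X_1\|^2\sim\mathrm{Exp}(\pi\lambda_b)$, using power $Q_1=Q(\|X_1\|)$; interferers located at the points $D_j$ of a homogeneous Poisson point process of intensity $\rho\eta_a\lambda_d$ in $\mathbb{R}^2$, using i.i.d. powers $Q_j$ distributed as $Q(\|X\|)$; and i.i.d. exponential (mean one) fading gains $H_1,\{H_j\}$; all these ingredients mutually independent. Let $\gamma_1=\frac{Q_1H_1\|X_1\|^{-\alpha}}{\sum_jQ_jH_j\|D_j\|^{-\alpha}}$. Then $$\eta_c(\nu,n_a):=\mathbb{P}[\gamma_1\ge\theta_c]=\int_0^{\infty}e^{-[n_a\Gamma(1+\nu)u^{1-\nu}+u]}\,\mathrm{d}u,\qquad n_a=\frac{\lambda_d}{\lambda_b}\rho\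eta_a\theta_c^{\frac{2}{\alpha}}\,\Gamma\!\left(1+\tfrac{2}{\alpha}\right)\Gamma\!\left(1-\tfrac{2}{\alpha}\right).$$
   Context: $\Gamma$ is the Gamma function and $\mathbb{1}(\cdot)$ the indicator function. This is the uplink coverage probability under Rayleigh fading with the proposed energy-efficient uplink power control; $\nu=0$ is constant power and $\nu=1$ channel inversion. *)

theory Defs
  imports "HOL-Probability.Probability"
begin

definition ppp_space :: "'a measure \<Rightarrow> 'a set measure" where
  "ppp_space \<mu> = sigma UNIV
     {{S. finite (S \<inter> A) \<and> card (S \<inter> A) = k} | A k. A \<in> sets \<mu> \<and> emeasure \<mu> A < \<infinity>}"

definition (in prob_space) poisson_point_process :: "'b measure \<Rightarrow> ('a \<Rightarrow> 'b set) \<Rightarrow> bool" where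
  "poisson_point_process \<mu> \<Phi> \<longleftrightarrow>
     \<Phi> \<in> measurable M (ppp_space \<mu>) \<and>
     (\<forall>A\<in>sets \<mu>. emeasure \<mu> A < \<infinity> \<longrightarrow>
        (AE \<omega> in M. finite (\<Phi> \<omega> \<inter> A)) \<and>
        (\<forall>k::nat. prob {\<omega>\<in>space M. card (\<Phi> \<omega> \<inter> A) = k}
             = (enn2real (emeasure \<mu> A)) ^ k / fact k * exp (- enn2real (emeasure \<mu> A)))) \<and>
     (\<forall>(n::nat) A. (\<forall>i<n. A i \<in> sets \<mu> \<and> emeasure \<mu> (A i) < \<infinity>) \<and> disjoint_family_on A {..<n}
        \<longrightarrow> indep_vars (\<lambda>_. count_space UNIV) (\<lambda>i \<omega>. card (\<Phi> \<omega> \<inter> A i)) {..<n})"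

definition exp_distr :: "real \<Rightarrow> real measure" where
  "exp_distr l = density lborel (exponential_density l)"

definition Qpow :: "real \<Rightarrow> real \<Rightarrow> real \<Rightarrow> real \<Rightarrow> real \<Rightarrow> real \<Rightarrow> real" where
  "Qpow \<alpha> \<nu> Qbar lmin lmax r =
     Qbar * r powr (\<alpha> * \<nu>) / Gamma (1 + \<alpha> * \<nu> / 2) *
     ((pi * lmin) powr (\<alpha> * \<nu> / 2) * (if \<nu> \<ge> 0 then 1 else 0)
      + (pi * lmax) powr (\<alpha> * \<nu> / 2) * (if - 2 / \<alpha> < \<nu> \<and> \<nu> < 0 then 1 else 0))"

text \<open>Distribution of the transmit power Q(|X|) when |X|^2 ~ Exp(pi lambda_b).\<close>
definition Q_distr :: "real \<Rightarrow> real \<Rightarrow> real \<Rightarrow> real \<Rightarrow> real \<Rightarrow> real \<Rightarrow> real measure" where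
  "Q_distr \<alpha> \<nu> Qbar lmin lmax lb =
     distr (exp_distr (pi * lb)) borel (\<lambda>s. Qpow \<alpha> \<nu> Qbar lmin lmax (sqrt s))"

text \<open>Intensity measure of the independently marked interferer PPP on
  R^2 x (power) x (fading): (rho eta_a lambda_d) Lebesgue x law of Q x Exp(1).\<close>
definition interferer_intensity ::
  "real \<Rightarrow> real \<Rightarrow> real \<Rightarrow> real \<Rightarrow> real \<Rightarrow> real \<Rightarrow> real \<Rightarrow> ((real \<times> real) \<times> real \<times> real) measure" where
  "interferer_intensity lI \<alpha> \<nu> Qbar lmin lmax lb =
     density (lborel :: (real \<times> real) measure) (\<lambda>_. ennreal lI)
       \<Otimes>\<^sub>M (Q_distr \<alpha> \<nu> Qbar lmin lmax lb \<Otimes>\<^sub>M exp_distr 1)"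

end

theory Submission
  imports Defs "HOL-Analysis.Ball_Volume"
begin

lemma one_minus_exp_nn:
  assumes "b \<ge> 0"
  shows "ennreal (1 - exp (- b)) = (\<integral>\<^sup>+w. ennreal (exp (- w)) * indicator {0..b} w \<partial>lborel)"
  using nn_intergal_power_times_exp_Icc[OF assms, of 0] by simp

lemma emeasure_small_set:
  fixes a w \<alpha> :: real
  assumes "a > 0" "w > 0" "\<alpha> > 0"
  shows "emeasure lborel {x::real\<times>real. w \<le> a * norm x powr (-\<alpha>)} = ennreal (pi * (a / w) powr (2 / \<alpha>))"
proof -
  define r where "r = (a / w) powr (1 / \<alpha>)"
  have r: "r > 0" using assms by (simp add: r_def)
  have eq: "{x::real\<times>real. w \<le> a * norm x powr (-\<alpha>)} = cball 0 r - {0}"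
  proof (intro set_eqI iffI)
    fix x :: "real \<times> real" assume h: "x \<in> {x::real\<times>real. w \<le> a * norm x powr (-\<alpha>)}"
    hence h: "w \<le> a * norm x powr (-\<alpha>)" by simp
    have "x \<noteq> 0" using h assms by auto
    hence nx: "norm x > 0" by simp
    have "w \<le> a / norm x powr \<alpha>" using h nx by (simp add: powr_minus divide_inverse)
    hence "norm x powr \<alpha> \<le> a / w" using nx assms by (simp add: field_simps)
    hence "(norm x powr \<alpha>) powr (1/\<alpha>) \<le> (a / w) powr (1/\<alpha>)"
      using assms nx by (intro powr_mono2) auto
    hence "norm x \<le> r" using assms nx by (simp add: powr_powr r_def)
    thus "x \<in> cball 0 r - {0}" using \<open>x \<noteq> 0\<close> by simp
  next
    fix x :: "real \<times> real" assume "x \<in> cball 0 r - {0}"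
    hence nx: "norm x > 0" "norm x \<le> r" by auto
    have "norm x powr \<alpha> \<le> r powr \<alpha>" using nx assms by (intro powr_mono2) auto
    also have "r powr \<alpha> = a / w" using assms by (simp add: r_def powr_powr)
    finally have "norm x powr \<alpha> \<le> a / w" .
    hence "w \<le> a / norm x powr \<alpha>" using nx assms by (simp add: field_simps)
    thus "x \<in> {x::real\<times>real. w \<le> a * norm x powr (-\<alpha>)}" using nx by (simp add: powr_minus divide_inverse)
  qed
  have "emeasure lborel (cball (0::real\<times>real) r - {0}) = emeasure lborel (cball (0::real\<times>real) r)"
    by (intro emeasure_Diff_null_set) (auto intro: emeasure_lborel_countable simp: null_sets_def)
  also have "\<dots> = ennreal (unit_ball_vol (real DIM(real\<times>real)) * r ^ DIM(real\<times>real))"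
    using r by (intro emeasure_cball) simp
  also have "\<dots> = ennreal (pi * (a / w) powr (2 / \<alpha>))"
    using assms by (simp add: unit_ball_vol_2 r_def power2_eq_square powr_add[symmetric])
  finally show ?thesis using eq by simp
qed

lemma spatial_integral:
  fixes a \<alpha> :: real
  assumes a: "a \<ge> 0" and al: "\<alpha> > 2"
  shows "(\<integral>\<^sup>+(x::real\<times>real). ennreal (1 - exp (- (a * norm x powr (-\<alpha>)))) \<partial>lborel)
           = ennreal (pi * Gamma (1 - 2 / \<alpha>) * a powr (2 / \<alpha>))"
proof (cases "a = 0")
  case True thus ?thesis by simp
next
  case False
  hence a: "a > 0" using a by simp
  have PSF: "pair_sigma_finite (lborel :: (real\<times>real) measure) (lborel :: real measure)"
    by (simp add: pair_sigma_finite_def lborel.sigma_finite_measure_axioms)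
  have "(\<integral>\<^sup>+(x::real\<times>real). ennreal (1 - exp (- (a * norm x powr (-\<alpha>)))) \<partial>lborel)
      = (\<integral>\<^sup>+(x::real\<times>real). (\<integral>\<^sup>+w. ennreal (exp (- w)) * indicator {0..a * norm x powr (-\<alpha>)} w \<partial>lborel) \<partial>lborel)"
    using a by (intro nn_integral_cong one_minus_exp_nn) simp
  also have "\<dots> = (\<integral>\<^sup>+w. (\<integral>\<^sup>+(x::real\<times>real). ennreal (exp (- w)) * indicator {0..a * norm x powr (-\<alpha>)} w \<partial>lborel) \<partial>lborel)"
    unfolding indicator_def atLeastAtMost_iff by (intro pair_sigma_finite.Fubini'[OF PSF, symmetric]) measurable
  also have "\<dots> = (\<integral>\<^sup>+w. ennreal (indicator {0..} w * w powr ((1 - 2 / \<alpha>) - 1) / exp w) * ennreal (pi * a powr (2 / \<alpha>)) \<partial>lborel)"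
  proof (intro nn_integral_cong_AE)
    show "AE w in lborel. (\<integral>\<^sup>+(x::real\<times>real). ennreal (exp (- w)) * indicator {0..a * norm x powr (-\<alpha>)} w \<partial>lborel)
        = ennreal (indicator {0..} w * w powr ((1 - 2 / \<alpha>) - 1) / exp w) * ennreal (pi * a powr (2 / \<alpha>))"
      using AE_lborel_singleton[of 0]
    proof eventually_elim
      case (elim w)
      show ?case
      proof (cases "w > 0")
        case False
        hence "w < 0" using elim by simp
        thus ?thesis by (simp add: indicator_def)
      next
        case True
        have "(\<integral>\<^sup>+(x::real\<times>real). ennreal (exp (- w)) * indicator {0..a * norm x powr (-\<alpha>)} w \<partial>lborel)
            = (\<integral>\<^sup>+(x::real\<times>real). ennreal (exp (- w)) * indicator {x. w \<le> a * norm x powr (-\<alpha>)} x \<partial>lborel)"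
          using True by (intro nn_integral_cong) (simp add: indicator_def)
        also have "\<dots> = ennreal (exp (- w)) * emeasure lborel {x::real\<times>real. w \<le> a * norm x powr (-\<alpha>)}"
          by (intro nn_integral_cmult_indicator) measurable
        also have "\<dots> = ennreal (exp (- w)) * ennreal (pi * (a / w) powr (2 / \<alpha>))"
          using a True al by (subst emeasure_small_set) auto
        also have "\<dots> = ennreal (indicator {0..} w * w powr ((1 - 2 / \<alpha>) - 1) / exp w) * ennreal (pi * a powr (2 / \<alpha>))"
          using True a al
          by (simp add: ennreal_mult'[symmetric] powr_divide powr_minus exp_minus field_simps)
        finally show ?thesis .
      qed
    qed
  qed
  also have "\<dots> = (\<integral>\<^sup>+w. ennreal (indicator {0..} w * w powr ((1 - 2 / \<alpha>) - 1) / exp w) \<partial>lborel) * ennreal (pi * a powr (2 / \<alpha>))"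
    by (rule nn_integral_multc) measurable
  also have "\<dots> = ennreal (Gamma (1 - 2 / \<alpha>)) * ennreal (pi * a powr (2 / \<alpha>))"
    using al by (subst Gamma_conv_nn_integral_real) auto
  also have "\<dots> = ennreal (pi * Gamma (1 - 2 / \<alpha>) * a powr (2 / \<alpha>))"
    using al by (subst ennreal_mult'[symmetric]) (auto intro!: Gamma_real_pos simp: mult_ac)
  finally show ?thesis .
qed

lemma exp_moment:
  fixes l p :: real
  assumes l: "l > 0" and p: "p > -1"
  shows "(\<integral>\<^sup>+s. ennreal (exponential_density l s) * ennreal (s powr p) \<partial>lborel) = ennreal (l powr (-p) * Gamma (1 + p))"
proof -
  have "ennreal (Gamma (1 + p)) = (\<integral>\<^sup>+u. ennreal (indicator {0..} u * u powr (1 + p - 1) / exp u) \<partial>lborel)"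
    using p by (intro Gamma_conv_nn_integral_real) simp
  also have "\<dots> = ennreal \<bar>l\<bar> * (\<integral>\<^sup>+s. ennreal (indicator {0..} (0 + l * s) * (0 + l * s) powr (1 + p - 1) / exp (0 + l * s)) \<partial>lborel)"
    using l by (intro nn_integral_real_affine) auto
  also have "\<dots> = ennreal (l powr p) * (\<integral>\<^sup>+s. ennreal (exponential_density l s) * ennreal (s powr p) \<partial>lborel)"
  proof -
    have "(\<integral>\<^sup>+s. ennreal (indicator {0..} (0 + l * s) * (0 + l * s) powr (1 + p - 1) / exp (0 + l * s)) \<partial>lborel)
        = (\<integral>\<^sup>+s. ennreal (l powr p / l) * (ennreal (exponential_density l s) * ennreal (s powr p)) \<partial>lborel)"
      using l by (intro nn_integral_cong)
        (auto simp: exponential_density_def indicator_def ennreal_mult'[symmetric] powr_mult zero_le_mult_iff exp_minus field_simps)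
    also have "\<dots> = ennreal (l powr p / l) * (\<integral>\<^sup>+s. ennreal (exponential_density l s) * ennreal (s powr p) \<partial>lborel)"
      by (intro nn_integral_cmult) measurable
    finally show ?thesis using l by (simp add: ennreal_mult'[symmetric] mult.assoc[symmetric])
  qed
  finally have *: "ennreal (Gamma (1 + p)) = ennreal (l powr p) * (\<integral>\<^sup>+s. ennreal (exponential_density l s) * ennreal (s powr p) \<partial>lborel)" .
  have "ennreal (l powr (-p) * Gamma (1 + p)) = ennreal (l powr (-p)) * ennreal (Gamma (1 + p))"
    using l by (simp add: ennreal_mult')
  also have "\<dots> = ennreal (l powr (-p) * l powr p) * (\<integral>\<^sup>+s. ennreal (exponential_density l s) * ennreal (s powr p) \<partial>lborel)"
    using l by (simp add: * ennreal_mult' mult.assoc)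
  also have "l powr (-p) * l powr p = 1" using l by (simp add: powr_add[symmetric])
  finally show ?thesis by simp
qed

lemma exp_tail:
  fixes x :: real
  assumes x: "x \<ge> 0"
  shows "(\<integral>\<^sup>+h. ennreal (exponential_density 1 h) * indicator {x..} h \<partial>lborel) = ennreal (exp (- x))"
proof -
  have "(\<integral>\<^sup>+h. ennreal (exponential_density 1 h) * indicator {x..} h \<partial>lborel)
      = (\<integral>\<^sup>+u. ennreal (exponential_density 1 (x + u)) * indicator {x..} (x + u) \<partial>lborel)"
    using nn_integral_real_affine[of "\<lambda>h. ennreal (exponential_density 1 h) * indicator {x..} h" 1 x] by simp
  also have "\<dots> = (\<integral>\<^sup>+u. ennreal (exp (- x)) * (ennreal (u ^ 0 * exp (- u)) * indicator {0..} u) \<partial>lborel)"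
    using x by (intro nn_integral_cong) (auto simp: exponential_density_def indicator_def ennreal_mult'[symmetric] exp_add[symmetric])
  also have "\<dots> = ennreal (exp (- x)) * (\<integral>\<^sup>+u. ennreal (u ^ 0 * exp (- u)) * indicator {0..} u \<partial>lborel)"
    by (intro nn_integral_cmult) measurable
  also have "\<dots> = ennreal (exp (- x))"
    using nn_intergal_power_times_exp_Ici[of 0] by simp
  finally show ?thesis .
qed

definition cnt :: "'a set \<Rightarrow> ennreal" where
  "cnt X = (if finite X then of_nat (card X) else \<top>)"

lemma unbounded_mult_top:
  fixes v x :: ennreal
  assumes "v > 0" "\<And>n. of_nat n * v \<le> x"
  shows "x = \<top>"
proof (rule ccontr)
  assume "x \<noteq> \<top>"
  then obtain r where r: "x = ennreal r" "r \<ge> 0" by (cases x) auto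
  have "v \<le> x" using assms(2)[of 1] by simp
  then obtain w where w: "v = ennreal w" "w > 0" using assms(1) r
    by (cases v) (auto simp: top_unique)
  obtain n :: nat where n: "r / w < n" using reals_Archimedean2 by blast
  have "ennreal (real n * w) \<le> ennreal r" using assms(2)[of n] r w by (simp add: ennreal_mult' ennreal_of_nat_eq_real_of_nat)
  hence "real n * w \<le> r" using r by (simp add: ennreal_le_iff)
  thus False using n w by (simp add: field_simps)
qed

lemma sum_as_cells:
  fixes s :: "'b \<Rightarrow> ennreal"
  assumes fin: "finite (range s)" and T: "finite T"
  shows "(\<Sum>p\<in>T. s p) = (\<Sum>v\<in>range s - {0}. v * of_nat (card (T \<inter> {p. s p = v})))"
proof -
  have "(\<Sum>p\<in>T. s p) = (\<Sum>p\<in>T. \<Sum>v\<in>range s - {0}. v * indicator {p. s p = v} p)"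
  proof (intro sum.cong refl)
    fix p assume "p \<in> T"
    show "s p = (\<Sum>v\<in>range s - {0}. v * indicator {p. s p = v} p)"
    proof (cases "s p = 0")
      case True
      have "(\<Sum>v\<in>range s - {0}. v * indicator {p. s p = v} p) = 0"
        using True by (intro sum.neutral) (auto simp: indicator_def)
      thus ?thesis using True by simp
    next
      case False
      hence "(\<Sum>v\<in>range s - {0}. v * indicator {p. s p = v} p) = s p * indicator {p. s p = s p} p"
        using fin by (intro sum.remove[THEN trans]) (auto intro!: sum.neutral simp: indicator_def)
      thus ?thesis by simp
    qed
  qed
  also have "\<dots> = (\<Sum>v\<in>range s - {0}. \<Sum>p\<in>T. v * indicator {p. s p = v} p)"
    by (rule sum.swap)
  also have "\<dots> = (\<Sum>v\<in>range s - {0}. v * of_nat (card (T \<inter> {p. s p = v})))"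
    using T by (intro sum.cong refl) (simp add: mult.commute; simp add: Int_def)
  finally show ?thesis .
qed

lemma sup_finite_sums:
  fixes s :: "'b \<Rightarrow> ennreal"
  assumes fin: "finite (range s)"
  shows "(SUP T\<in>{T. finite T \<and> T \<subseteq> S}. \<Sum>p\<in>T. s p) = (\<Sum>v\<in>range s - {0}. v * cnt (S \<inter> {p. s p = v}))"
proof (rule antisym)
  show "(SUP T\<in>{T. finite T \<and> T \<subseteq> S}. \<Sum>p\<in>T. s p) \<le> (\<Sum>v\<in>range s - {0}. v * cnt (S \<inter> {p. s p = v}))"
  proof (rule SUP_least)
    fix T assume T: "T \<in> {T. finite T \<and> T \<subseteq> S}"
    have "(\<Sum>p\<in>T. s p) = (\<Sum>v\<in>range s - {0}. v * of_nat (card (T \<inter> {p. s p = v})))"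
      using T fin by (intro sum_as_cells) auto
    also have "\<dots> \<le> (\<Sum>v\<in>range s - {0}. v * cnt (S \<inter> {p. s p = v}))"
    proof (intro sum_mono mult_left_mono)
      fix v
      show "of_nat (card (T \<inter> {p. s p = v})) \<le> cnt (S \<inter> {p. s p = v})"
      proof (cases "finite (S \<inter> {p. s p = v})")
        case True
        hence "card (T \<inter> {p. s p = v}) \<le> card (S \<inter> {p. s p = v})" using T by (intro card_mono) auto
        thus ?thesis using True by (simp add: cnt_def)
      qed (simp add: cnt_def)
    qed simp
    finally show "(\<Sum>p\<in>T. s p) \<le> (\<Sum>v\<in>range s - {0}. v * cnt (S \<inter> {p. s p = v}))" .
  qed
next
  show "(\<Sum>v\<in>range s - {0}. v * cnt (S \<inter> {p. s p = v})) \<le> (SUP T\<in>{T. finite T \<and> T \<subseteq> S}. \<Sum>p\<in>T. s p)"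
  proof (cases "\<forall>v\<in>range s - {0}. finite (S \<inter> {p. s p = v})")
    case True
    define T where "T = (\<Union>v\<in>range s - {0}. S \<inter> {p. s p = v})"
    have Tf: "finite T" unfolding T_def using True fin by (intro finite_UN_I) auto
    have TS: "T \<subseteq> S" by (auto simp: T_def)
    have "(\<Sum>v\<in>range s - {0}. v * cnt (S \<inter> {p. s p = v})) = (\<Sum>v\<in>range s - {0}. v * of_nat (card (T \<inter> {p. s p = v})))"
    proof (intro sum.cong refl)
      fix v assume v: "v \<in> range s - {0}"
      have "T \<inter> {p. s p = v} = S \<inter> {p. s p = v}" using v by (auto simp: T_def)
      thus "v * cnt (S \<inter> {p. s p = v}) = v * of_nat (card (T \<inter> {p. s p = v}))"
        using True v by (simp add: cnt_def)
    qed
    also have "\<dots> = (\<Sum>p\<in>T. s p)" using fin Tf by (intro sum_as_cells[symmetric])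
    also have "\<dots> \<le> (SUP T\<in>{T. finite T \<and> T \<subseteq> S}. \<Sum>p\<in>T. s p)"
      using Tf TS by (intro SUP_upper) auto
    finally show ?thesis .
  next
    case False
    then obtain v0 where v0: "v0 \<in> range s - {0}" "infinite (S \<inter> {p. s p = v0})" by blast
    have "(SUP T\<in>{T. finite T \<and> T \<subseteq> S}. \<Sum>p\<in>T. s p) = \<top>"
    proof (rule unbounded_mult_top)
      show "v0 > 0" using v0 by (simp add: zero_less_iff_neq_zero)
      fix n
      obtain B where B: "finite B" "card B = n" "B \<subseteq> S \<inter> {p. s p = v0}"
        using infinite_arbitrarily_large[OF v0(2)] by blast
      have "(\<Sum>p\<in>B. s p) = of_nat n * v0" using B by (simp add: subset_eq)
      moreover have "(\<Sum>p\<in>B. s p) \<le> (SUP T\<in>{T. finite T \<and> T \<subseteq> S}. \<Sum>p\<in>T. s p)"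
        using B by (intro SUP_upper) auto
      ultimately show "of_nat n * v0 \<le> (SUP T\<in>{T. finite T \<and> T \<subseteq> S}. \<Sum>p\<in>T. s p)" by simp
    qed
    thus ?thesis by (metis top_greatest)
  qed
qed

definition EE :: "ennreal \<Rightarrow> ennreal" where
  "EE x = (if x = \<top> then 0 else ennreal (exp (- enn2real x)))"

lemma EE_measurable[measurable]: "EE \<in> borel_measurable borel"
  unfolding EE_def by measurable

lemma EE_le_1: "EE x \<le> 1"
  by (auto simp: EE_def)

lemma EE_antimono: "x \<le> y \<Longrightarrow> EE y \<le> EE x"
  by (cases "y = \<top>") (auto simp: EE_def top_unique enn2real_mono less_top)

lemma EE_SUP:
  assumes inc: "incseq x"
  shows "EE (SUP m. x m) = (INF m. EE (x m))"
proof (rule antisym)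
  show "EE (SUP m. x m) \<le> (INF m. EE (x m))"
    by (intro INF_greatest EE_antimono SUP_upper) auto
next
  have dec: "decseq (\<lambda>m. EE (x m))"
    using inc by (auto simp: incseq_def decseq_def intro: EE_antimono)
  show "(INF m. EE (x m)) \<le> EE (SUP m. x m)"
  proof (cases "(SUP m. x m) = \<top>")
    case False
    then obtain L where L: "(SUP m. x m) = ennreal L" "L \<ge> 0" by (cases "SUP m. x m") auto
    have fin: "x m \<noteq> \<top>" for m
      using SUP_upper[of m UNIV x] L by (auto simp: top_unique)
    have "x \<longlonglongrightarrow> ennreal L" using LIMSEQ_SUP[OF inc] L by simp
    from this L(2) have lim1: "(\<lambda>m. enn2real (x m)) \<longlonglongrightarrow> L" by (rule tendsto_enn2real)
    have "(\<lambda>m. ennreal (exp (- enn2real (x m)))) \<longlonglongrightarrow> ennreal (exp (- L))"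
      by (rule tendsto_ennrealI[OF tendsto_exp[OF tendsto_minus[OF lim1]]])
    hence "(\<lambda>m. EE (x m)) \<longlonglongrightarrow> EE (SUP m. x m)" using fin L by (simp add: EE_def)
    with LIMSEQ_INF[OF dec] have "(INF m. EE (x m)) = EE (SUP m. x m)" by (rule LIMSEQ_unique)
    thus ?thesis by simp
  next
    case True
    have bound: "(INF m. EE (x m)) \<le> ennreal (exp (- K))" for K :: real
    proof -
      have "ennreal (max 0 K) < (SUP m. x m)" unfolding True by (rule ennreal_less_top)
      then obtain m where m: "ennreal (max 0 K) < x m" by (auto simp: less_SUP_iff)
      have "EE (x m) \<le> ennreal (exp (- K))"
      proof (cases "x m = \<top>")
        case False
        then obtain y where y: "x m = ennreal y" "y \<ge> 0" by (cases "x m") auto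
        have "K < y" using m y by (cases "K \<ge> 0") (auto simp: ennreal_less_iff)
        thus ?thesis using y by (simp add: EE_def)
      qed (simp add: EE_def)
      thus ?thesis by (rule order_trans[OF INF_lower[OF UNIV_I]])
    qed
    have "(INF m. EE (x m)) = 0"
    proof (rule ccontr)
      assume ne: "(INF m. EE (x m)) \<noteq> 0"
      have "(INF m. EE (x m)) \<le> 1" using INF_lower[OF UNIV_I, of "\<lambda>m. EE (x m)" 0] EE_le_1[of "x 0"] by order
      then obtain r where r: "(INF m. EE (x m)) = ennreal r" "r > 0" using ne
        by (cases "INF m. EE (x m)") (auto simp: top_unique)
      have "ennreal r \<le> ennreal (exp (- (- ln (r / 2))))" using bound[of "- ln (r/2)"] r by simp
      hence "r \<le> r / 2" using r by (simp add: ennreal_le_iff)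
      thus False using r by simp
    qed
    thus ?thesis by simp
  qed
qed

lemma sets_ppp_space:
  "sets (ppp_space \<mu>) = sigma_sets UNIV {{S. finite (S \<inter> A) \<and> card (S \<inter> A) = k} | A k. A \<in> sets \<mu> \<and> emeasure \<mu> A < \<infinity>}"
  unfolding ppp_space_def by (intro sets_measure_of) auto

lemma space_ppp_space: "space (ppp_space \<mu>) = UNIV"
  unfolding ppp_space_def by (simp add: space_measure_of_conv)

lemma ppp_gen_sets:
  assumes "A \<in> sets \<mu>" "emeasure \<mu> A < \<infinity>"
  shows "{S. finite (S \<inter> A) \<and> card (S \<inter> A) = k} \<in> sets (ppp_space \<mu>)"
  unfolding sets_ppp_space using assms by (intro sigma_sets.Basic) blast

lemma cnt_measurable:
  assumes "C \<in> sets \<mu>" "emeasure \<mu> C < \<infinity>"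
  shows "(\<lambda>S. cnt (S \<inter> C)) \<in> borel_measurable (ppp_space \<mu>)"
proof -
  define k where "k S = (if finite (S \<inter> C) then Some (card (S \<inter> C)) else None)" for S
  define h where "h z = (case z of None \<Rightarrow> \<top> | Some n \<Rightarrow> (of_nat n :: ennreal))" for z
  have k: "k \<in> measurable (ppp_space \<mu>) (count_space UNIV)"
  proof (subst measurable_count_space_eq2_countable, safe)
    fix a :: "nat option"
    show "k -` {a} \<inter> space (ppp_space \<mu>) \<in> sets (ppp_space \<mu>)"
    proof (cases a)
      case (Some n)
      have "k -` {a} \<inter> space (ppp_space \<mu>) = {S. finite (S \<inter> C) \<and> card (S \<inter> C) = n}"
        by (auto simp: k_def Some space_ppp_space split: if_splits)
      thus ?thesis using ppp_gen_sets[OF assms] by simp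
    next
      case None
      have "k -` {a} \<inter> space (ppp_space \<mu>) = space (ppp_space \<mu>) - (\<Union>n. {S. finite (S \<inter> C) \<and> card (S \<inter> C) = n})"
        by (auto simp: k_def None space_ppp_space split: if_splits)
      thus ?thesis using ppp_gen_sets[OF assms] by auto
    qed
  qed auto
  have h: "h \<in> measurable (count_space UNIV) borel" by simp
  have "(\<lambda>S. h (k S)) \<in> borel_measurable (ppp_space \<mu>)" using measurable_comp[OF k h] by (simp add: comp_def)
  moreover have "(\<lambda>S. h (k S)) = (\<lambda>S. cnt (S \<inter> C))"
    by (auto simp: h_def k_def cnt_def fun_eq_iff)
  ultimately show ?thesis by simp
qed

lemma (in prob_space) ppp_count:
  assumes P: "poisson_point_process \<mu> \<Phi>" and A: "A \<in> sets \<mu>" "emeasure \<mu> A < \<infinity>"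
  shows "(\<lambda>\<omega>. card (\<Phi> \<omega> \<inter> A)) \<in> measurable M (count_space UNIV)"
    and "AE \<omega> in M. finite (\<Phi> \<omega> \<inter> A)"
    and "\<And>k. prob {\<omega>\<in>space M. card (\<Phi> \<omega> \<inter> A) = k}
             = (enn2real (emeasure \<mu> A)) ^ k / fact k * exp (- enn2real (emeasure \<mu> A))"
proof -
  have "indep_vars (\<lambda>_. count_space UNIV) (\<lambda>i \<omega>. card (\<Phi> \<omega> \<inter> (\<lambda>_. A) i)) {..<(1::nat)}"
    using P A unfolding poisson_point_process_def by (auto simp: disjoint_family_on_def)
  thus "(\<lambda>\<omega>. card (\<Phi> \<omega> \<inter> A)) \<in> measurable M (count_space UNIV)"
    unfolding indep_vars_def by auto
  show "AE \<omega> in M. finite (\<Phi> \<omega> \<inter> A)"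
    using P A unfolding poisson_point_process_def by auto
  show "\<And>k. prob {\<omega>\<in>space M. card (\<Phi> \<omega> \<inter> A) = k}
             = (enn2real (emeasure \<mu> A)) ^ k / fact k * exp (- enn2real (emeasure \<mu> A))"
    using P A unfolding poisson_point_process_def by auto
qed

lemma (in prob_space) poisson_laplace:
  fixes N :: "'a \<Rightarrow> nat"
  assumes N: "N \<in> measurable M (count_space UNIV)"
    and P: "\<And>k. prob {\<omega>\<in>space M. N \<omega> = k} = m ^ k / fact k * exp (- m)" and m: "m \<ge> 0"
  shows "(\<integral>\<^sup>+\<omega>. ennreal (exp (- c * real (N \<omega>))) \<partial>M) = ennreal (exp (- m * (1 - exp (- c))))"
proof -
  define A where "A k = {\<omega>\<in>space M. N \<omega> = k}" for k
  have A[measurable]: "A k \<in> sets M" for k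
  proof -
    have "A k = N -` {k} \<inter> space M" by (auto simp: A_def)
    thus ?thesis using measurable_sets[OF N, of "{k}"] by simp
  qed
  have "(\<integral>\<^sup>+\<omega>. ennreal (exp (- c * real (N \<omega>))) \<partial>M)
      = (\<integral>\<^sup>+\<omega>. (\<Sum>k. ennreal (exp (- c * real k)) * indicator (A k) \<omega>) \<partial>M)"
  proof (intro nn_integral_cong)
    fix \<omega> assume "\<omega> \<in> space M"
    hence "\<omega> \<in> A (N \<omega>)" by (simp add: A_def)
    moreover have "disjoint_family A" by (auto simp: disjoint_family_on_def A_def)
    ultimately show "ennreal (exp (- c * real (N \<omega>))) = (\<Sum>k. ennreal (exp (- c * real k)) * indicator (A k) \<omega>)"
      by (simp add: suminf_cmult_indicator)
  qed
  also have "\<dots> = (\<Sum>k. \<integral>\<^sup>+\<omega>. ennreal (exp (- c * real k)) * indicator (A k) \<omega> \<partial>M)"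
    by (intro nn_integral_suminf) measurable
  also have "\<dots> = (\<Sum>k. ennreal (exp (- m) * ((m * exp (- c)) ^ k / fact k)))"
  proof (intro suminf_cong)
    fix k
    have "(\<integral>\<^sup>+\<omega>. ennreal (exp (- c * real k)) * indicator (A k) \<omega> \<partial>M) = ennreal (exp (- c * real k)) * emeasure M (A k)"
      by (intro nn_integral_cmult_indicator) measurable
    also have "\<dots> = ennreal (exp (- c * real k)) * ennreal (m ^ k / fact k * exp (- m))"
      by (simp add: emeasure_eq_measure P[folded A_def])
    also have "\<dots> = ennreal (exp (- m) * ((m * exp (- c)) ^ k / fact k))"
      using m by (simp add: ennreal_mult'[symmetric] power_mult_distrib exp_of_nat_mult[symmetric] mult_ac)
    finally show "(\<integral>\<^sup>+\<omega>. ennreal (exp (- c * real k)) * indicator (A k) \<omega> \<partial>M) = ennreal (exp (- m) * ((m * exp (- c)) ^ k / fact k))" .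
  qed
  also have "\<dots> = ennreal (exp (- m) * exp (m * exp (- c)))"
  proof (rule suminf_ennreal_eq)
    show "0 \<le> exp (- m) * ((m * exp (- c)) ^ k / fact k)" for k using m by simp
    have "(\<lambda>k. (m * exp (- c)) ^ k /\<^sub>R fact k) sums exp (m * exp (- c))" by (rule exp_converges)
    hence "(\<lambda>k. (m * exp (- c)) ^ k / fact k) sums exp (m * exp (- c))" by (simp add: divide_inverse mult.commute)
    thus "(\<lambda>k. exp (- m) * ((m * exp (- c)) ^ k / fact k)) sums (exp (- m) * exp (m * exp (- c)))"
      by (rule sums_mult)
  qed
  also have "exp (- m) * exp (m * exp (- c)) = exp (- m * (1 - exp (- c)))"
    by (simp add: exp_add[symmetric] algebra_simps)
  finally show ?thesis .
qed

lemma (in prob_space) ppp_laplace_simple: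
  fixes \<mu> :: "'b measure" and \<Phi> :: "'a \<Rightarrow> 'b set" and C :: "ennreal \<Rightarrow> 'b set"
  assumes PPP: "poisson_point_process \<mu> \<Phi>" and V: "finite V" "\<And>v. v \<in> V \<Longrightarrow> 0 < v \<and> v < \<top>"
    and C: "\<And>v. v \<in> V \<Longrightarrow> C v \<in> sets \<mu> \<and> emeasure \<mu> (C v) < \<infinity>"
    and disj: "\<And>v w. v \<in> V \<Longrightarrow> w \<in> V \<Longrightarrow> v \<noteq> w \<Longrightarrow> C v \<inter> C w = {}"
  shows "(\<integral>\<^sup>+\<omega>. EE (\<Sum>v\<in>V. v * cnt (\<Phi> \<omega> \<inter> C v)) \<partial>M)
       = ennreal (exp (- (\<Sum>v\<in>V. enn2real (emeasure \<mu> (C v)) * (1 - exp (- enn2real v)))))"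
proof -
  define n where "n = card V"
  obtain e where e: "bij_betw e {0..<n} V" using ex_bij_betw_nat_finite[OF V(1)] n_def by blast
  have e': "bij_betw e {..<n} V" using e by (simp add: atLeast0LessThan)
  have eV: "j < n \<Longrightarrow> e j \<in> V" for j using e' by (auto simp: bij_betw_def)
  define A where "A j = C (e j)" for j
  have A: "j < n \<Longrightarrow> A j \<in> sets \<mu> \<and> emeasure \<mu> (A j) < \<infinity>" for j using C eV by (simp add: A_def)
  have dA: "disjoint_family_on A {..<n}"
  proof (unfold disjoint_family_on_def, intro ballI impI)
    fix j k assume jk: "j \<in> {..<n}" "k \<in> {..<n}" "j \<noteq> k"
    hence "e j \<noteq> e k" using e' by (auto simp: bij_betw_def inj_on_def)
    thus "A j \<inter> A k = {}" using jk eV disj by (simp add: A_def)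
  qed
  have indep: "indep_vars (\<lambda>_. count_space UNIV) (\<lambda>j \<omega>. card (\<Phi> \<omega> \<inter> A j)) {..<n}"
    using PPP A dA unfolding poisson_point_process_def by blast
  define c where "c j = enn2real (e j)" for j
  define X where "X j \<omega> = ennreal (exp (- c j * real (card (\<Phi> \<omega> \<inter> A j))))" for j \<omega>
  have indepX: "indep_vars (\<lambda>_. borel) X {..<n}"
    unfolding X_def by (rule indep_vars_compose2[OF indep]) simp
  have "(\<integral>\<^sup>+\<omega>. EE (\<Sum>v\<in>V. v * cnt (\<Phi> \<omega> \<inter> C v)) \<partial>M) = (\<integral>\<^sup>+\<omega>. (\<Prod>j\<in>{..<n}. X j \<omega>) \<partial>M)"
  proof (rule nn_integral_cong_AE)
    have "AE \<omega> in M. \<forall>j\<in>{..<n}. finite (\<Phi> \<omega> \<inter> A j)"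
      using A by (intro AE_finite_allI ppp_count(2)[OF PPP]) auto
    thus "AE \<omega> in M. EE (\<Sum>v\<in>V. v * cnt (\<Phi> \<omega> \<inter> C v)) = (\<Prod>j\<in>{..<n}. X j \<omega>)"
    proof eventually_elim
      case (elim \<omega>)
      have "(\<Sum>v\<in>V. v * cnt (\<Phi> \<omega> \<inter> C v)) = (\<Sum>j\<in>{..<n}. e j * cnt (\<Phi> \<omega> \<inter> C (e j)))"
        using e' by (rule sum.reindex_bij_betw[symmetric])
      also have "\<dots> = (\<Sum>j\<in>{..<n}. ennreal (c j * real (card (\<Phi> \<omega> \<inter> A j))))"
      proof (intro sum.cong refl)
        fix j assume j: "j \<in> {..<n}"
        have fj: "finite (\<Phi> \<omega> \<inter> C (e j))" using elim j by (simp add: A_def)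
        have cj: "cnt (\<Phi> \<omega> \<inter> C (e j)) = of_nat (card (\<Phi> \<omega> \<inter> A j))" using fj by (simp add: cnt_def A_def)
        have "e j = ennreal (c j)" "c j \<ge> 0" using V(2)[OF eV[of j]] j by (auto simp: c_def less_top)
        thus "e j * cnt (\<Phi> \<omega> \<inter> C (e j)) = ennreal (c j * real (card (\<Phi> \<omega> \<inter> A j)))"
          unfolding cj by (simp add: ennreal_mult' ennreal_of_nat_eq_real_of_nat)
      qed
      also have "\<dots> = ennreal (\<Sum>j\<in>{..<n}. c j * real (card (\<Phi> \<omega> \<inter> A j)))"
        by (intro sum_ennreal) (simp add: c_def)
      finally have "EE (\<Sum>v\<in>V. v * cnt (\<Phi> \<omega> \<inter> C v)) = ennreal (exp (- (\<Sum>j\<in>{..<n}. c j * real (card (\<Phi> \<omega> \<inter> A j)))))"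
        by (simp add: EE_def c_def sum_nonneg)
      also have "\<dots> = ennreal (\<Prod>j\<in>{..<n}. exp (- c j * real (card (\<Phi> \<omega> \<inter> A j))))"
        by (simp add: exp_sum[symmetric] sum_negf[symmetric])
      also have "\<dots> = (\<Prod>j\<in>{..<n}. X j \<omega>)"
        by (simp add: X_def prod_ennreal)
      finally show ?case .
    qed
  qed
  also have "\<dots> = (\<Prod>j\<in>{..<n}. \<integral>\<^sup>+\<omega>. X j \<omega> \<partial>M)"
    by (rule indep_vars_nn_integral) (use indepX in auto)
  also have "\<dots> = (\<Prod>j\<in>{..<n}. ennreal (exp (- enn2real (emeasure \<mu> (A j)) * (1 - exp (- c j)))))"
  proof (intro prod.cong refl)
    fix j assume j: "j \<in> {..<n}"
    show "(\<integral>\<^sup>+\<omega>. X j \<omega> \<partial>M) = ennreal (exp (- enn2real (emeasure \<mu> (A j)) * (1 - exp (- c j))))"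
      unfolding X_def using A[of j] j
      by (intro poisson_laplace ppp_count(1)[OF PPP] ppp_count(3)[OF PPP]) auto
  qed
  also have "\<dots> = ennreal (exp (- (\<Sum>j\<in>{..<n}. enn2real (emeasure \<mu> (A j)) * (1 - exp (- c j)))))"
    by (simp add: prod_ennreal exp_sum[symmetric] sum_negf[symmetric])
  also have "(\<Sum>j\<in>{..<n}. enn2real (emeasure \<mu> (A j)) * (1 - exp (- c j)))
      = (\<Sum>v\<in>V. enn2real (emeasure \<mu> (C v)) * (1 - exp (- enn2real v)))"
    unfolding A_def c_def using e' by (rule sum.reindex_bij_betw)
  finally show ?thesis .
qed

lemma integral_simple_cells:
  fixes \<mu> :: "'b measure" and s :: "'b \<Rightarrow> ennreal"
  assumes sp: "space \<mu> = UNIV" and fin: "finite (range s)" and st: "\<And>p. s p < \<top>"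
    and C: "\<And>v. v \<in> range s - {0} \<Longrightarrow> {p. s p = v} \<in> sets \<mu> \<and> emeasure \<mu> {p. s p = v} < \<infinity>"
  shows "(\<integral>\<^sup>+p. ennreal (1 - exp (- enn2real (s p))) \<partial>\<mu>)
       = ennreal (\<Sum>v\<in>range s - {0}. enn2real (emeasure \<mu> {p. s p = v}) * (1 - exp (- enn2real v)))"
proof -
  have "(\<integral>\<^sup>+p. ennreal (1 - exp (- enn2real (s p))) \<partial>\<mu>)
      = (\<integral>\<^sup>+p. (\<Sum>v\<in>range s - {0}. ennreal (1 - exp (- enn2real v)) * indicator {p. s p = v} p) \<partial>\<mu>)"
  proof (intro nn_integral_cong)
    fix p
    show "ennreal (1 - exp (- enn2real (s p))) = (\<Sum>v\<in>range s - {0}. ennreal (1 - exp (- enn2real v)) * indicator {p. s p = v} p)"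
    proof (cases "s p = 0")
      case True
      have "(\<Sum>v\<in>range s - {0}. ennreal (1 - exp (- enn2real v)) * indicator {p. s p = v} p) = 0"
        using True by (intro sum.neutral) (auto simp: indicator_def)
      thus ?thesis using True by simp
    next
      case False
      have "(\<Sum>v\<in>range s - {0}. ennreal (1 - exp (- enn2real v)) * indicator {p. s p = v} p)
          = ennreal (1 - exp (- enn2real (s p))) * indicator {q. s q = s p} p"
        using fin False by (intro sum.remove[THEN trans]) (auto intro!: sum.neutral simp: indicator_def)
      thus ?thesis by simp
    qed
  qed
  also have "\<dots> = (\<Sum>v\<in>range s - {0}. \<integral>\<^sup>+p. ennreal (1 - exp (- enn2real v)) * indicator {p. s p = v} p \<partial>\<mu>)"
  proof (rule nn_integral_sum)
    fix v assume v: "v \<in> range s - {0}"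
    have [measurable]: "{p. s p = v} \<in> sets \<mu>" using C[OF v] by auto
    show "(\<lambda>p. ennreal (1 - exp (- enn2real v)) * indicator {p. s p = v} p) \<in> borel_measurable \<mu>" by measurable
  qed
  also have "\<dots> = (\<Sum>v\<in>range s - {0}. ennreal (1 - exp (- enn2real v)) * emeasure \<mu> {p. s p = v})"
    using C by (intro sum.cong refl nn_integral_cmult_indicator) auto
  also have "\<dots> = (\<Sum>v\<in>range s - {0}. ennreal (enn2real (emeasure \<mu> {p. s p = v}) * (1 - exp (- enn2real v))))"
  proof (intro sum.cong refl)
    fix v assume v: "v \<in> range s - {0}"
    have "emeasure \<mu> {p. s p = v} = ennreal (enn2real (emeasure \<mu> {p. s p = v}))"
      using C[OF v] by (simp add: less_top ennreal_enn2real)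
    thus "ennreal (1 - exp (- enn2real v)) * emeasure \<mu> {p. s p = v} = ennreal (enn2real (emeasure \<mu> {p. s p = v}) * (1 - exp (- enn2real v)))"
      by (metis (no_types, lifting) enn2real_nonneg ennreal_mult' mult.commute)
  qed
  also have "\<dots> = ennreal (\<Sum>v\<in>range s - {0}. enn2real (emeasure \<mu> {p. s p = v}) * (1 - exp (- enn2real v)))"
    by (intro sum_ennreal) simp
  finally show ?thesis .
qed

lemma (in prob_space) ppp_laplace:
  fixes \<mu> :: "'b measure" and \<Phi> :: "'a \<Rightarrow> 'b set" and g :: "'b \<Rightarrow> real"
  assumes PPP: "poisson_point_process \<mu> \<Phi>" and sp: "space \<mu> = UNIV"
    and g[measurable]: "g \<in> borel_measurable \<mu>" and g0: "\<And>p. g p \<ge> 0"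
    and L: "(\<integral>\<^sup>+p. ennreal (1 - exp (- g p)) \<partial>\<mu>) = ennreal \<Lambda>" and \<Lambda>0: "\<Lambda> \<ge> 0"
  shows "(\<lambda>S. infsum (\<lambda>p. ennreal (g p)) S) \<in> borel_measurable (ppp_space \<mu>)"
    and "(\<integral>\<^sup>+\<omega>. EE (infsum (\<lambda>p. ennreal (g p)) (\<Phi> \<omega>)) \<partial>M) = ennreal (exp (- \<Lambda>))"
proof -
  have fin_level: "emeasure \<mu> {p. a \<le> g p} < \<infinity>" if a: "a > 0" for a
  proof -
    have S[measurable]: "{p. a \<le> g p} \<in> sets \<mu>"
      using measurable_sets[OF g, of "{a..}"] sp by (simp add: vimage_def)
    have "ennreal (1 - exp (- a)) * emeasure \<mu> {p. a \<le> g p} = (\<integral>\<^sup>+p. ennreal (1 - exp (- a)) * indicator {p. a \<le> g p} p \<partial>\<mu>)"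
      by (rule nn_integral_cmult_indicator[symmetric]) simp
    also have "\<dots> \<le> (\<integral>\<^sup>+p. ennreal (1 - exp (- g p)) \<partial>\<mu>)"
      by (intro nn_integral_mono) (auto simp: indicator_def intro!: ennreal_leI)
    also have "\<dots> < \<top>" using L by simp
    finally have *: "ennreal (1 - exp (- a)) * emeasure \<mu> {p. a \<le> g p} < \<top>" .
    have "1 - exp (- a) > 0" using a by simp
    thus ?thesis using * by (auto simp: ennreal_mult_less_top)
  qed
  obtain s where s_simple: "\<And>i. simple_function \<mu> (s i)" and s_inc: "incseq s"
    and s_fin: "\<And>i x. s i x < \<top>" and s_sup: "\<And>x. (SUP i. s i x) = ennreal (g x)"
    using borel_measurable_implies_simple_function_sequence'[of "\<lambda>p. ennreal (g p)" \<mu>] by auto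
  have s_rng: "finite (range (s i))" for i using simple_functionD(1)[OF s_simple[of i]] sp by simp
  have s_sets: "{p. s i p = v} \<in> sets \<mu>" for i v
    using simple_functionD(2)[OF s_simple[of i], of "{v}"] sp by (simp add: vimage_def)
  have s_le: "s i p \<le> ennreal (g p)" for i p using SUP_upper[of i UNIV "\<lambda>i. s i p"] s_sup[of p] by simp
  have s_mono: "s i p \<le> s j p" if "i \<le> j" for i j p using s_inc that by (auto simp: incseq_def le_fun_def)
  have cell_fin: "emeasure \<mu> {p. s i p = v} < \<infinity>" if v: "v \<in> range (s i) - {0}" for i v
  proof -
    have v0: "0 < enn2real v" using v s_fin by (auto simp: enn2real_positive_iff less_top[symmetric] zero_less_iff_neq_zero)
    have "{p. s i p = v} \<subseteq> {p. enn2real v \<le> g p}"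
    proof
      fix p assume "p \<in> {p. s i p = v}"
      hence "v \<le> ennreal (g p)" using s_le[of i p] by simp
      hence "enn2real v \<le> enn2real (ennreal (g p))" by (rule enn2real_mono) simp
      thus "p \<in> {p. enn2real v \<le> g p}" using g0[of p] by simp
    qed
    hence "emeasure \<mu> {p. s i p = v} \<le> emeasure \<mu> {p. enn2real v \<le> g p}"
      using measurable_sets[OF g, of "{enn2real v..}"] sp by (intro emeasure_mono) (auto simp: vimage_def)
    also have "\<dots> < \<infinity>" using fin_level[OF v0] .
    finally show ?thesis .
  qed
  define F where "F i S = (\<Sum>v\<in>range (s i) - {0}. v * cnt (S \<inter> {p. s i p = v}))" for i S
  have F_sup: "F i S = (SUP T\<in>{T. finite T \<and> T \<subseteq> S}. \<Sum>p\<in>T. s i p)" for i S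
    unfolding F_def by (rule sup_finite_sums[symmetric, OF s_rng])
  have F_lim: "infsum (\<lambda>p. ennreal (g p)) S = (SUP i. F i S)" for S
  proof -
    have "infsum (\<lambda>p. ennreal (g p)) S = (SUP T\<in>{T. finite T \<and> T \<subseteq> S}. \<Sum>p\<in>T. ennreal (g p))"
      by (rule nonneg_infsum_complete) simp
    also have "\<dots> = (SUP T\<in>{T. finite T \<and> T \<subseteq> S}. SUP i. \<Sum>p\<in>T. s i p)"
    proof (intro SUP_cong refl)
      fix T
      have "(SUP i. \<Sum>p\<in>T. s i p) = (\<Sum>p\<in>T. SUP i. s i p)"
        by (rule ennreal_SUP_sum) (auto simp: incseq_def s_mono)
      thus "(\<Sum>p\<in>T. ennreal (g p)) = (SUP i. \<Sum>p\<in>T. s i p)" by (simp add: s_sup)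
    qed
    also have "\<dots> = (SUP i. SUP T\<in>{T. finite T \<and> T \<subseteq> S}. \<Sum>p\<in>T. s i p)"
      by (rule SUP_commute)
    finally show ?thesis by (simp add: F_sup)
  qed
  have F_inc: "incseq (\<lambda>i. F i S)" for S
    unfolding F_sup incseq_def by (auto intro!: SUP_mono' sum_mono s_mono)
  have F_meas[measurable]: "F i \<in> borel_measurable (ppp_space \<mu>)" for i
    unfolding F_def
    by (intro borel_measurable_sum borel_measurable_times_ennreal borel_measurable_const cnt_measurable s_sets cell_fin)
  show meas: "(\<lambda>S. infsum (\<lambda>p. ennreal (g p)) S) \<in> borel_measurable (ppp_space \<mu>)"
    unfolding F_lim by measurable
  have \<Phi>_meas[measurable]: "\<Phi> \<in> measurable M (ppp_space \<mu>)"
    using PPP unfolding poisson_point_process_def by simp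
  define \<Lambda>i where "\<Lambda>i i = (\<Sum>v\<in>range (s i) - {0}. enn2real (emeasure \<mu> {p. s i p = v}) * (1 - exp (- enn2real v)))" for i
  have step: "(\<integral>\<^sup>+\<omega>. EE (F i (\<Phi> \<omega>)) \<partial>M) = ennreal (exp (- \<Lambda>i i))" for i
    unfolding F_def \<Lambda>i_def
  proof (rule ppp_laplace_simple[OF PPP])
    show "finite (range (s i) - {0})" using s_rng by simp
    show "\<And>v. v \<in> range (s i) - {0} \<Longrightarrow> 0 < v \<and> v < \<top>"
      using s_fin by (auto simp: zero_less_iff_neq_zero)
    show "\<And>v. v \<in> range (s i) - {0} \<Longrightarrow> {p. s i p = v} \<in> sets \<mu> \<and> emeasure \<mu> {p. s i p = v} < \<infinity>"
      using s_sets cell_fin by auto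
  qed auto
  have int_step: "(\<integral>\<^sup>+p. ennreal (1 - exp (- enn2real (s i p))) \<partial>\<mu>) = ennreal (\<Lambda>i i)" for i
    unfolding \<Lambda>i_def using s_rng s_fin s_sets cell_fin by (intro integral_simple_cells sp) auto
  have \<Lambda>i0: "\<Lambda>i i \<ge> 0" for i unfolding \<Lambda>i_def by (intro sum_nonneg mult_nonneg_nonneg) auto
  have pt_inc: "incseq (\<lambda>i. ennreal (1 - exp (- enn2real (s i p))))" for p
    unfolding incseq_def using s_fin
    by (auto intro!: ennreal_leI simp: enn2real_mono s_mono)
  have pt_sup: "(SUP i. ennreal (1 - exp (- enn2real (s i p)))) = ennreal (1 - exp (- g p))" for p
  proof -
    have "(\<lambda>i. s i p) \<longlonglongrightarrow> ennreal (g p)"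
      using LIMSEQ_SUP[of "\<lambda>i. s i p"] s_sup[of p] s_inc by (simp add: incseq_def le_fun_def)
    from this g0[of p] have l1: "(\<lambda>i. enn2real (s i p)) \<longlonglongrightarrow> g p" by (rule tendsto_enn2real)
    have "(\<lambda>i. ennreal (1 - exp (- enn2real (s i p)))) \<longlonglongrightarrow> ennreal (1 - exp (- g p))"
      by (rule tendsto_ennrealI[OF tendsto_diff[OF tendsto_const tendsto_exp[OF tendsto_minus[OF l1]]]])
    with LIMSEQ_SUP[OF pt_inc[of p]] show ?thesis by (rule LIMSEQ_unique)
  qed
  have "(SUP i. ennreal (\<Lambda>i i)) = ennreal \<Lambda>"
  proof -
    have "(SUP i. ennreal (\<Lambda>i i)) = (SUP i. \<integral>\<^sup>+p. ennreal (1 - exp (- enn2real (s i p))) \<partial>\<mu>)"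
      by (simp add: int_step)
    also have "\<dots> = (\<integral>\<^sup>+p. (SUP i. ennreal (1 - exp (- enn2real (s i p)))) \<partial>\<mu>)"
    proof (rule nn_integral_monotone_convergence_SUP[symmetric])
      show "incseq (\<lambda>i p. ennreal (1 - exp (- enn2real (s i p))))"
        using pt_inc by (auto simp: incseq_def le_fun_def)
      fix i
      have [measurable]: "s i \<in> borel_measurable \<mu>" by (rule borel_measurable_simple_function[OF s_simple])
      show "(\<lambda>p. ennreal (1 - exp (- enn2real (s i p)))) \<in> borel_measurable \<mu>" by measurable
    qed
    also have "\<dots> = ennreal \<Lambda>" by (simp add: pt_sup L)
    finally show ?thesis .
  qed
  moreover have "incseq (\<lambda>i. ennreal (\<Lambda>i i))"
    unfolding int_step[symmetric] incseq_def
    by (auto intro!: nn_integral_mono ennreal_leI simp: enn2real_mono s_mono s_fin)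
  ultimately have "(\<lambda>i. ennreal (\<Lambda>i i)) \<longlonglongrightarrow> ennreal \<Lambda>" using LIMSEQ_SUP by metis
  hence \<Lambda>lim: "\<Lambda>i \<longlonglongrightarrow> \<Lambda>" using \<Lambda>i0 \<Lambda>0 by (simp add: tendsto_ennreal_iff)
  have "(\<integral>\<^sup>+\<omega>. EE (infsum (\<lambda>p. ennreal (g p)) (\<Phi> \<omega>)) \<partial>M) = (\<integral>\<^sup>+\<omega>. (INF i. EE (F i (\<Phi> \<omega>))) \<partial>M)"
    by (simp add: F_lim EE_SUP[OF F_inc])
  also have "\<dots> = (INF i. \<integral>\<^sup>+\<omega>. EE (F i (\<Phi> \<omega>)) \<partial>M)"
  proof (rule nn_integral_monotone_convergence_INF_decseq)
    show "decseq (\<lambda>i \<omega>. EE (F i (\<Phi> \<omega>)))"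
    proof (rule decseq_SucI, rule le_funI)
      fix i \<omega>
      show "EE (F (Suc i) (\<Phi> \<omega>)) \<le> EE (F i (\<Phi> \<omega>))"
        by (rule EE_antimono) (use F_inc[of "\<Phi> \<omega>"] in \<open>simp add: incseq_Suc_iff\<close>)
    qed
    fix i
    show "(\<lambda>\<omega>. EE (F i (\<Phi> \<omega>))) \<in> borel_measurable M" by measurable
    have "(\<integral>\<^sup>+\<omega>. EE (F i (\<Phi> \<omega>)) \<partial>M) \<le> (\<integral>\<^sup>+\<omega>. 1 \<partial>M)"
      by (intro nn_integral_mono EE_le_1)
    also have "\<dots> < \<infinity>" by (simp add: emeasure_space_1)
    finally show "(\<integral>\<^sup>+\<omega>. EE (F i (\<Phi> \<omega>)) \<partial>M) < \<infinity>" .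
  qed
  also have "\<dots> = (INF i. ennreal (exp (- \<Lambda>i i)))" by (simp add: step)
  also have "\<dots> = ennreal (exp (- \<Lambda>))"
  proof -
    have dec: "decseq (\<lambda>i. ennreal (exp (- \<Lambda>i i)))"
      using \<open>incseq (\<lambda>i. ennreal (\<Lambda>i i))\<close> \<Lambda>i0 by (auto simp: decseq_def incseq_def intro!: ennreal_leI)
    have "(\<lambda>i. ennreal (exp (- \<Lambda>i i))) \<longlonglongrightarrow> ennreal (exp (- \<Lambda>))"
      by (rule tendsto_ennrealI[OF tendsto_exp[OF tendsto_minus[OF \<Lambda>lim]]])
    with LIMSEQ_INF[OF dec] show ?thesis by (rule LIMSEQ_unique)
  qed
  finally show "(\<integral>\<^sup>+\<omega>. EE (infsum (\<lambda>p. ennreal (g p)) (\<Phi> \<omega>)) \<partial>M) = ennreal (exp (- \<Lambda>))" .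
qed

definition qconst :: "real \<Rightarrow> real \<Rightarrow> real \<Rightarrow> real \<Rightarrow> real \<Rightarrow> real" where
  "qconst \<alpha> \<nu> Qbar lmin lmax = Qbar / Gamma (1 + \<alpha> * \<nu> / 2) *
     ((pi * lmin) powr (\<alpha> * \<nu> / 2) * (if \<nu> \<ge> 0 then 1 else 0)
      + (pi * lmax) powr (\<alpha> * \<nu> / 2) * (if - 2 / \<alpha> < \<nu> \<and> \<nu> < 0 then 1 else 0))"

lemma Qpow_eq: "Qpow \<alpha> \<nu> Qbar lmin lmax r = qconst \<alpha> \<nu> Qbar lmin lmax * r powr (\<alpha> * \<nu>)"
  unfolding Qpow_def qconst_def by (simp add: field_simps)

lemma Qpow_measurable[measurable]: "Qpow \<alpha> \<nu> Qbar lmin lmax \<in> borel_measurable borel"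
  unfolding Qpow_eq[abs_def] by measurable

lemma qconst_pos:
  assumes "\<alpha> > 2" "\<nu> > - 2 / \<alpha>" "Qbar > 0" "lmin > 0" "lmax > 0"
  shows "qconst \<alpha> \<nu> Qbar lmin lmax > 0"
proof -
  have "\<alpha> * \<nu> > -2" using assms by (simp add: field_simps)
  hence G: "Gamma (1 + \<alpha> * \<nu> / 2) > 0" by (intro Gamma_real_pos) simp
  have "(pi * lmin) powr (\<alpha> * \<nu> / 2) * (if \<nu> \<ge> 0 then 1 else 0)
      + (pi * lmax) powr (\<alpha> * \<nu> / 2) * (if - 2 / \<alpha> < \<nu> \<and> \<nu> < 0 then 1 else 0) > 0"
    using assms by (cases "\<nu> \<ge> 0") auto
  thus ?thesis using G assms unfolding qconst_def by simp
qed

lemma ennreal_powr_max_mult: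
  assumes "q \<ge> 0" "K \<ge> 0" "a > 0"
  shows "ennreal (exponential_density 1 h) * ennreal (K * (max 0 (q * h)) powr a)
       = ennreal (K * q powr a) * (ennreal (exponential_density 1 h) * ennreal (h powr a))"
proof (cases "h < 0")
  case True thus ?thesis by (simp add: exponential_density_def)
next
  case False
  hence "max 0 (q * h) = q * h" using assms by simp
  thus ?thesis using assms False
    by (simp add: powr_mult ennreal_mult'[symmetric] mult_ac exponential_density_def)
qed

lemma intensity_laplace:
  fixes \<alpha> \<nu> Qbar lmin lmax lb lI t :: real
  assumes al: "\<alpha> > 2" and nu: "\<nu> > - 2 / \<alpha>" and Q: "Qbar > 0" "lmin > 0" "lmax > 0" and lb: "lb > 0"
    and lI: "lI \<ge> 0" and t: "t \<ge> 0"
  shows "(\<integral>\<^sup>+p. ennreal (1 - exp (- (t * max 0 (fst (snd p) * snd (snd p) * norm (fst p) powr (- \<alpha>)))))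
            \<partial>interferer_intensity lI \<alpha> \<nu> Qbar lmin lmax lb)
       = ennreal (t powr (2 / \<alpha>) * (lI * pi * Gamma (1 - 2 / \<alpha>) * Gamma (1 + 2 / \<alpha>)
                  * qconst \<alpha> \<nu> Qbar lmin lmax powr (2 / \<alpha>) * (pi * lb) powr (- \<nu>) * Gamma (1 + \<nu>)))"
proof -
  define cq where "cq = qconst \<alpha> \<nu> Qbar lmin lmax"
  have cq: "cq > 0" unfolding cq_def using qconst_pos al nu Q by blast
  have "2 / \<alpha> < 1" using al by simp
  hence nu1: "\<nu> > -1" using nu by linarith
  define PQ where "PQ = Q_distr \<alpha> \<nu> Qbar lmin lmax lb"
  define PE where "PE = exp_distr 1"
  define D where "D = density (lborel :: (real\<times>real) measure) (\<lambda>_. ennreal lI)"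
  have PQ_prob: "prob_space PQ" unfolding PQ_def Q_distr_def exp_distr_def
    using lb by (intro prob_space.prob_space_distr prob_space_exponential_density) auto
  have PE_prob: "prob_space PE" unfolding PE_def exp_distr_def by (intro prob_space_exponential_density) simp
  interpret PQE: pair_prob_space PQ PE using PQ_prob PE_prob by (simp add: pair_prob_space_def pair_sigma_finite_def prob_space_imp_sigma_finite)
  have QE_prob: "prob_space (PQ \<Otimes>\<^sub>M PE)" by (rule PQE.prob_space_axioms)
  have QE_sig: "sigma_finite_measure (PQ \<Otimes>\<^sub>M PE)" using QE_prob by (rule prob_space_imp_sigma_finite)
  have PSF: "pair_sigma_finite (lborel :: (real\<times>real) measure) (PQ \<Otimes>\<^sub>M PE)"
    by (simp add: pair_sigma_finite_def lborel.sigma_finite_measure_axioms QE_sig)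
  have PE_sig: "sigma_finite_measure PE" using PE_prob by (rule prob_space_imp_sigma_finite)
  have [measurable_cong]: "sets PQ = sets borel" by (simp add: PQ_def Q_distr_def)
  have [measurable_cong]: "sets PE = sets borel" by (simp add: PE_def exp_distr_def)
  have [measurable_cong]: "sets D = sets borel" by (simp add: D_def)
  define G where "G p = ennreal (1 - exp (- (t * max 0 (fst (snd p) * snd (snd p) * norm (fst p) powr (- \<alpha>)))))"
    for p :: "(real\<times>real) \<times> real \<times> real"
  have G_meas[measurable]: "G \<in> borel_measurable (D \<Otimes>\<^sub>M (PQ \<Otimes>\<^sub>M PE))" unfolding G_def by measurable
  have "(\<integral>\<^sup>+p. G p \<partial>(D \<Otimes>\<^sub>M (PQ \<Otimes>\<^sub>M PE))) = (\<integral>\<^sup>+x. (\<integral>\<^sup>+y. G (x, y) \<partial>(PQ \<Otimes>\<^sub>M PE)) \<partial>D)"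
    by (rule sigma_finite_measure.nn_integral_fst[OF QE_sig, symmetric]) measurable
  also have "\<dots> = (\<integral>\<^sup>+x. ennreal lI * (\<integral>\<^sup>+y. G (x, y) \<partial>(PQ \<Otimes>\<^sub>M PE)) \<partial>lborel)"
    unfolding D_def by (rule nn_integral_density) measurable
  also have "\<dots> = ennreal lI * (\<integral>\<^sup>+x. (\<integral>\<^sup>+y. G (x, y) \<partial>(PQ \<Otimes>\<^sub>M PE)) \<partial>lborel)"
    by (rule nn_integral_cmult) measurable
  also have "(\<integral>\<^sup>+x. (\<integral>\<^sup>+y. G (x, y) \<partial>(PQ \<Otimes>\<^sub>M PE)) \<partial>lborel) = (\<integral>\<^sup>+y. (\<integral>\<^sup>+x. G (x, y) \<partial>lborel) \<partial>(PQ \<Otimes>\<^sub>M PE))"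
    by (rule pair_sigma_finite.Fubini'[OF PSF, symmetric]) measurable
  also have "\<dots> = (\<integral>\<^sup>+y. ennreal (pi * Gamma (1 - 2 / \<alpha>) * t powr (2 / \<alpha>)) * ennreal ((max 0 (fst y * snd y)) powr (2 / \<alpha>)) \<partial>(PQ \<Otimes>\<^sub>M PE))"
  proof (rule nn_integral_cong)
    fix y :: "real \<times> real"
    have "(\<integral>\<^sup>+x. G (x, y) \<partial>lborel) = (\<integral>\<^sup>+(x::real\<times>real). ennreal (1 - exp (- ((t * max 0 (fst y * snd y)) * norm x powr (- \<alpha>)))) \<partial>lborel)"
    proof (rule nn_integral_cong)
      fix x :: "real \<times> real"
      have "max 0 (fst y * snd y * norm x powr (- \<alpha>)) = max 0 (fst y * snd y) * norm x powr (- \<alpha>)"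
        by (simp add: max_mult_distrib_right max.commute)
      thus "G (x, y) = ennreal (1 - exp (- ((t * max 0 (fst y * snd y)) * norm x powr (- \<alpha>))))"
        by (simp add: G_def mult.assoc)
    qed
    also have "\<dots> = ennreal (pi * Gamma (1 - 2 / \<alpha>) * (t * max 0 (fst y * snd y)) powr (2 / \<alpha>))"
      using t al by (intro spatial_integral) auto
    also have "\<dots> = ennreal (pi * Gamma (1 - 2 / \<alpha>) * t powr (2 / \<alpha>)) * ennreal ((max 0 (fst y * snd y)) powr (2 / \<alpha>))"
      using t al by (simp add: powr_mult ennreal_mult'[symmetric] mult_ac Gamma_real_pos)
    finally show "(\<integral>\<^sup>+x. G (x, y) \<partial>lborel) = ennreal (pi * Gamma (1 - 2 / \<alpha>) * t powr (2 / \<alpha>)) * ennreal ((max 0 (fst y * snd y)) powr (2 / \<alpha>))" .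
  qed
  also have "\<dots> = ennreal (pi * Gamma (1 - 2 / \<alpha>) * t powr (2 / \<alpha>)) * (\<integral>\<^sup>+y. ennreal ((max 0 (fst y * snd y)) powr (2 / \<alpha>)) \<partial>(PQ \<Otimes>\<^sub>M PE))"
    by (rule nn_integral_cmult) measurable
  also have "(\<integral>\<^sup>+y. ennreal ((max 0 (fst y * snd y)) powr (2 / \<alpha>)) \<partial>(PQ \<Otimes>\<^sub>M PE))
      = (\<integral>\<^sup>+q. (\<integral>\<^sup>+h. ennreal ((max 0 (q * h)) powr (2 / \<alpha>)) \<partial>PE) \<partial>PQ)"
  proof -
    define G2 where "G2 y = ennreal ((max 0 (fst y * snd y)) powr (2 / \<alpha>))" for y :: "real \<times> real"
    have "(\<integral>\<^sup>+y. G2 y \<partial>(PQ \<Otimes>\<^sub>M PE)) = (\<integral>\<^sup>+q. (\<integral>\<^sup>+h. G2 (q, h) \<partial>PE) \<partial>PQ)"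
      by (rule sigma_finite_measure.nn_integral_fst[OF PE_sig, symmetric]) (unfold G2_def, measurable)
    thus ?thesis by (simp add: G2_def)
  qed
  also have "\<dots> = (\<integral>\<^sup>+s. ennreal (Gamma (1 + 2 / \<alpha>) * cq powr (2 / \<alpha>)) * (ennreal (exponential_density (pi * lb) s) * ennreal (s powr \<nu>)) \<partial>lborel)"
  proof -
    have "(\<integral>\<^sup>+q. (\<integral>\<^sup>+h. ennreal ((max 0 (q * h)) powr (2 / \<alpha>)) \<partial>PE) \<partial>PQ)
        = (\<integral>\<^sup>+s. (\<integral>\<^sup>+h. ennreal ((max 0 (Qpow \<alpha> \<nu> Qbar lmin lmax (sqrt s) * h)) powr (2 / \<alpha>)) \<partial>PE) \<partial>exp_distr (pi * lb))"
    proof -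
      have m: "(\<lambda>q. \<integral>\<^sup>+h. ennreal ((max 0 (q * h)) powr (2 / \<alpha>)) \<partial>PE) \<in> borel_measurable borel"
        by (rule sigma_finite_measure.borel_measurable_nn_integral[OF PE_sig]) measurable
      show ?thesis
        unfolding PQ_def Q_distr_def by (rule nn_integral_distr) (simp add: exp_distr_def, use m in simp)
    qed
    also have "\<dots> = (\<integral>\<^sup>+s. ennreal (exponential_density (pi * lb) s) * (\<integral>\<^sup>+h. ennreal ((max 0 (Qpow \<alpha> \<nu> Qbar lmin lmax (sqrt s) * h)) powr (2 / \<alpha>)) \<partial>PE) \<partial>lborel)"
    proof -
      have m: "(\<lambda>q. \<integral>\<^sup>+h. ennreal ((max 0 (q * h)) powr (2 / \<alpha>)) \<partial>PE) \<in> borel_measurable borel"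
        by (rule sigma_finite_measure.borel_measurable_nn_integral[OF PE_sig]) measurable
      have m2: "(\<lambda>s. \<integral>\<^sup>+h. ennreal ((max 0 (Qpow \<alpha> \<nu> Qbar lmin lmax (sqrt s) * h)) powr (2 / \<alpha>)) \<partial>PE) \<in> borel_measurable lborel"
        using measurable_compose[OF _ m, of "\<lambda>s. Qpow \<alpha> \<nu> Qbar lmin lmax (sqrt s)" lborel] by simp
      show ?thesis
        unfolding exp_distr_def by (rule nn_integral_density) (use m2 lb in \<open>auto simp add: exponential_density_nonneg\<close>)
    qed
    also have "\<dots> = (\<integral>\<^sup>+s. ennreal (Gamma (1 + 2 / \<alpha>) * cq powr (2 / \<alpha>)) * (ennreal (exponential_density (pi * lb) s) * ennreal (s powr \<nu>)) \<partial>lborel)"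
    proof (rule nn_integral_cong)
      fix s :: real
      show "ennreal (exponential_density (pi * lb) s) * (\<integral>\<^sup>+h. ennreal ((max 0 (Qpow \<alpha> \<nu> Qbar lmin lmax (sqrt s) * h)) powr (2 / \<alpha>)) \<partial>PE)
          = ennreal (Gamma (1 + 2 / \<alpha>) * cq powr (2 / \<alpha>)) * (ennreal (exponential_density (pi * lb) s) * ennreal (s powr \<nu>))"
      proof (cases "s < 0")
        case True thus ?thesis by (simp add: exponential_density_def)
      next
        case False
        define q where "q = Qpow \<alpha> \<nu> Qbar lmin lmax (sqrt s)"
        have q: "q = cq * s powr (\<alpha> * \<nu> / 2)"
        proof -
          have "sqrt s powr (\<alpha> * \<nu>) = s powr (\<alpha> * \<nu> / 2)"
            using False al by (simp add: powr_half_sqrt[symmetric] powr_powr)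
          thus ?thesis by (simp add: q_def Qpow_eq cq_def)
        qed
        have q0: "q \<ge> 0" using q cq by simp
        have "(\<integral>\<^sup>+h. ennreal ((max 0 (q * h)) powr (2 / \<alpha>)) \<partial>PE)
            = (\<integral>\<^sup>+h. ennreal (exponential_density 1 h) * ennreal (1 * (max 0 (q * h)) powr (2 / \<alpha>)) \<partial>lborel)"
          unfolding PE_def exp_distr_def by (simp add: nn_integral_density exponential_density_nonneg)
        also have "\<dots> = (\<integral>\<^sup>+h. ennreal (1 * q powr (2 / \<alpha>)) * (ennreal (exponential_density 1 h) * ennreal (h powr (2 / \<alpha>))) \<partial>lborel)"
          using q0 al by (intro nn_integral_cong ennreal_powr_max_mult) auto
        also have "\<dots> = ennreal (1 * q powr (2 / \<alpha>)) * (\<integral>\<^sup>+h. ennreal (exponential_density 1 h) * ennreal (h powr (2 / \<alpha>)) \<partial>lborel)"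
          by (rule nn_integral_cmult) measurable
        also have "\<dots> = ennreal (q powr (2 / \<alpha>)) * ennreal (Gamma (1 + 2 / \<alpha>))"
        proof -
          have "0 < 2 / \<alpha>" using al by simp
          hence "-1 < 2 / \<alpha>" by linarith
          thus ?thesis using exp_moment[of 1 "2 / \<alpha>"] by simp
        qed
        also have "q powr (2 / \<alpha>) = cq powr (2 / \<alpha>) * s powr \<nu>"
          using q cq al by (simp add: powr_mult powr_powr)
        finally have I: "(\<integral>\<^sup>+h. ennreal ((max 0 (q * h)) powr (2 / \<alpha>)) \<partial>PE) = ennreal (cq powr (2 / \<alpha>) * s powr \<nu>) * ennreal (Gamma (1 + 2 / \<alpha>))" .
        have G2: "Gamma (1 + 2 / \<alpha>) > 0" using al by (intro Gamma_real_pos) (simp add: add_pos_pos)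
        have ed: "exponential_density (pi * lb) s \<ge> 0" using lb by (simp add: exponential_density_nonneg)
        show ?thesis unfolding q_def[symmetric] I using G2 ed
          by (simp add: ennreal_mult[symmetric] mult_ac)
      qed
    qed
    finally show ?thesis .
  qed
  also have "\<dots> = ennreal (Gamma (1 + 2 / \<alpha>) * cq powr (2 / \<alpha>)) * ennreal ((pi * lb) powr (- \<nu>) * Gamma (1 + \<nu>))"
    using lb nu1 by (subst nn_integral_cmult) (measurable, simp add: exp_moment)
  finally have fin: "(\<integral>\<^sup>+p. G p \<partial>(D \<Otimes>\<^sub>M (PQ \<Otimes>\<^sub>M PE))) = ennreal lI * (ennreal (pi * Gamma (1 - 2 / \<alpha>) * t powr (2 / \<alpha>)) *
      (ennreal (Gamma (1 + 2 / \<alpha>) * cq powr (2 / \<alpha>)) * ennreal ((pi * lb) powr (- \<nu>) * Gamma (1 + \<nu>))))" .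
  have G1: "Gamma (1 - 2 / \<alpha>) > 0" using al by (intro Gamma_real_pos) simp
  have G2: "Gamma (1 + 2 / \<alpha>) > 0" using al by (intro Gamma_real_pos) (simp add: add_pos_pos)
  have G3: "Gamma (1 + \<nu>) > 0" using nu1 by (intro Gamma_real_pos) simp
  have "interferer_intensity lI \<alpha> \<nu> Qbar lmin lmax lb = D \<Otimes>\<^sub>M (PQ \<Otimes>\<^sub>M PE)"
    by (simp add: interferer_intensity_def D_def PQ_def PE_def)
  hence "(\<integral>\<^sup>+p. ennreal (1 - exp (- (t * max 0 (fst (snd p) * snd (snd p) * norm (fst p) powr (- \<alpha>)))))
            \<partial>interferer_intensity lI \<alpha> \<nu> Qbar lmin lmax lb) = (\<integral>\<^sup>+p. G p \<partial>(D \<Otimes>\<^sub>M (PQ \<Otimes>\<^sub>M PE)))"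
    by (simp add: G_def)
  also have "\<dots> = ennreal (t powr (2 / \<alpha>) * (lI * pi * Gamma (1 - 2 / \<alpha>) * Gamma (1 + 2 / \<alpha>)
                  * cq powr (2 / \<alpha>) * (pi * lb) powr (- \<nu>) * Gamma (1 + \<nu>)))"
    unfolding fin using G1 G2 G3 lI t by (simp add: ennreal_mult[symmetric] mult_ac)
  finally show ?thesis unfolding cq_def .
qed

lemma Int_stable_preimages: "Int_stable {f -` B \<inter> space M | B. B \<in> sets N}"
  unfolding Int_stable_def
proof safe
  fix B1 B2 assume "B1 \<in> sets N" "B2 \<in> sets N"
  thus "\<exists>B. f -` B1 \<inter> space M \<inter> (f -` B2 \<inter> space M) = f -` B \<inter> space M \<and> B \<in> sets N"
    by (intro exI[of _ "B1 \<inter> B2"]) auto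
qed

lemma (in prob_space) joint_law3:
  fixes X :: "'a \<Rightarrow> 'x" and Y :: "'a \<Rightarrow> 'y" and Z :: "'a \<Rightarrow> 'z"
  assumes X[measurable]: "X \<in> measurable M MX" and Y[measurable]: "Y \<in> measurable M MY" and Z[measurable]: "Z \<in> measurable M MZ"
    and ind: "indep_sets (\<lambda>i::nat. if i = 0 then {X -` B \<inter> space M | B. B \<in> sets MX}
                     else if i = 1 then {Y -` B \<inter> space M | B. B \<in> sets MY}
                     else {Z -` B \<inter> space M | B. B \<in> sets MZ}) {0, 1, 2}"
  shows "distr M (MX \<Otimes>\<^sub>M (MY \<Otimes>\<^sub>M MZ)) (\<lambda>\<omega>. (X \<omega>, (Y \<omega>, Z \<omega>)))
       = distr M MX X \<Otimes>\<^sub>M (distr M MY Y \<Otimes>\<^sub>M distr M MZ Z)"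
proof -
  define E where "E = (\<lambda>i::nat. if i = 0 then {X -` B \<inter> space M | B. B \<in> sets MX}
                     else if i = 1 then {Y -` B \<inter> space M | B. B \<in> sets MY}
                     else {Z -` B \<inter> space M | B. B \<in> sets MZ})"
  have E0: "E 0 = {X -` B \<inter> space M | B. B \<in> sets MX}" and E1: "E 1 = {Y -` B \<inter> space M | B. B \<in> sets MY}"
    and E2: "E 2 = {Z -` B \<inter> space M | B. B \<in> sets MZ}"
    and E1': "E (Suc 0) = {Y -` B \<inter> space M | B. B \<in> sets MY}" by (simp_all add: E_def)
  have indE: "indep_sets E {0, 1, 2}" using ind by (simp add: E_def)
  define I where "I = (\<lambda>j::nat. if j = 0 then {0::nat} else {1, 2})"
  have ind2: "indep_sets (\<lambda>j. sigma_sets (space M) (\<Union>i\<in>I j. E i)) {0, 1}"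
  proof (rule indep_sets_collect_sigma)
    have "(\<Union>j\<in>{0::nat, 1}. I j) = {0, 1, 2}" by (auto simp: I_def)
    thus "indep_sets E (\<Union>j\<in>{0::nat, 1}. I j)" using indE by simp
    show "\<And>i j. j \<in> {0, 1} \<Longrightarrow> i \<in> I j \<Longrightarrow> Int_stable (E i)"
      by (auto simp: E_def Int_stable_preimages)
    show "disjoint_family_on I {0, 1}" by (auto simp: disjoint_family_on_def I_def)
  qed
  have I0: "(\<Union>i\<in>I 0. E i) = E 0" and I1: "(\<Union>i\<in>I 1. E i) = E 1 \<union> E 2" by (auto simp: I_def)
  define S where "S = sigma (space M) (E 1 \<union> E 2)"
  have ES: "E 1 \<union> E 2 \<subseteq> Pow (space M)" unfolding E1 E2 by auto
  have sS: "sets S = sigma_sets (space M) (E 1 \<union> E 2)" unfolding S_def using ES by (rule sets_measure_of)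
  have spS: "space S = space M" unfolding S_def using ES by (rule space_measure_of)
  have YS: "Y \<in> measurable S MY"
    unfolding measurable_def using measurable_space[OF Y] by (auto simp: spS sS E1 E1' intro!: sigma_sets.Basic)
  have ZS: "Z \<in> measurable S MZ"
    unfolding measurable_def using measurable_space[OF Z] by (auto simp: spS sS E2 intro!: sigma_sets.Basic)
  have YZS: "(\<lambda>\<omega>. (Y \<omega>, Z \<omega>)) \<in> measurable S (MY \<Otimes>\<^sub>M MZ)" using YS ZS by (rule measurable_Pair)
  have pY: "prob_space (distr M MY Y)" and pZ: "prob_space (distr M MZ Z)" and pX: "prob_space (distr M MX X)"
    and pYZ: "prob_space (distr M (MY \<Otimes>\<^sub>M MZ) (\<lambda>\<omega>. (Y \<omega>, Z \<omega>)))"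
    by (auto intro!: prob_space_distr)
  have inner: "distr M MY Y \<Otimes>\<^sub>M distr M MZ Z = distr M (MY \<Otimes>\<^sub>M MZ) (\<lambda>\<omega>. (Y \<omega>, Z \<omega>))"
  proof (rule pair_measure_eqI)
    show "sigma_finite_measure (distr M MY Y)" using pY by (rule prob_space_imp_sigma_finite)
    show "sigma_finite_measure (distr M MZ Z)" using pZ by (rule prob_space_imp_sigma_finite)
    show "sets (distr M MY Y \<Otimes>\<^sub>M distr M MZ Z) = sets (distr M (MY \<Otimes>\<^sub>M MZ) (\<lambda>\<omega>. (Y \<omega>, Z \<omega>)))" by simp
    fix A B assume A: "A \<in> sets (distr M MY Y)" and B: "B \<in> sets (distr M MZ Z)"
    hence A': "A \<in> sets MY" and B': "B \<in> sets MZ" by auto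
    define F where "F j = (if j = (1::nat) then Y -` A \<inter> space M else Z -` B \<inter> space M)" for j
    have "prob (\<Inter>j\<in>{1, 2}. F j) = (\<Prod>j\<in>{1, 2}. prob (F j))"
      using A' B' by (intro indep_setsD[OF indE]) (auto simp: F_def E_def)
    hence "prob ((Y -` A \<inter> space M) \<inter> (Z -` B \<inter> space M)) = prob (Y -` A \<inter> space M) * prob (Z -` B \<inter> space M)"
      by (simp add: F_def Int_commute)
    moreover have "(\<lambda>\<omega>. (Y \<omega>, Z \<omega>)) -` (A \<times> B) \<inter> space M = (Y -` A \<inter> space M) \<inter> (Z -` B \<inter> space M)" by auto
    ultimately show "emeasure (distr M MY Y) A * emeasure (distr M MZ Z) B = emeasure (distr M (MY \<Otimes>\<^sub>M MZ) (\<lambda>\<omega>. (Y \<omega>, Z \<omega>))) (A \<times> B)"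
      using A' B' by (simp add: emeasure_distr emeasure_eq_measure ennreal_mult[symmetric])
  qed
  have outer: "distr M MX X \<Otimes>\<^sub>M distr M (MY \<Otimes>\<^sub>M MZ) (\<lambda>\<omega>. (Y \<omega>, Z \<omega>)) = distr M (MX \<Otimes>\<^sub>M (MY \<Otimes>\<^sub>M MZ)) (\<lambda>\<omega>. (X \<omega>, (Y \<omega>, Z \<omega>)))"
  proof (rule pair_measure_eqI)
    show "sigma_finite_measure (distr M MX X)" using pX by (rule prob_space_imp_sigma_finite)
    show "sigma_finite_measure (distr M (MY \<Otimes>\<^sub>M MZ) (\<lambda>\<omega>. (Y \<omega>, Z \<omega>)))" using pYZ by (rule prob_space_imp_sigma_finite)
    show "sets (distr M MX X \<Otimes>\<^sub>M distr M (MY \<Otimes>\<^sub>M MZ) (\<lambda>\<omega>. (Y \<omega>, Z \<omega>))) = sets (distr M (MX \<Otimes>\<^sub>M (MY \<Otimes>\<^sub>M MZ)) (\<lambda>\<omega>. (X \<omega>, (Y \<omega>, Z \<omega>))))" by simp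
    fix A B assume A: "A \<in> sets (distr M MX X)" and B: "B \<in> sets (distr M (MY \<Otimes>\<^sub>M MZ) (\<lambda>\<omega>. (Y \<omega>, Z \<omega>)))"
    hence A': "A \<in> sets MX" and B': "B \<in> sets (MY \<Otimes>\<^sub>M MZ)" by auto
    have BS: "(\<lambda>\<omega>. (Y \<omega>, Z \<omega>)) -` B \<inter> space M \<in> sigma_sets (space M) (E 1 \<union> E 2)"
      using measurable_sets[OF YZS B'] by (simp add: spS sS)
    define F where "F j = (if j = (0::nat) then X -` A \<inter> space M else (\<lambda>\<omega>. (Y \<omega>, Z \<omega>)) -` B \<inter> space M)" for j
    have "prob (\<Inter>j\<in>{0, 1}. F j) = (\<Prod>j\<in>{0, 1}. prob (F j))"
    proof (rule indep_setsD[OF ind2])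
      have F0: "F 0 \<in> sigma_sets (space M) (\<Union>i\<in>I 0. E i)" unfolding I0 using A'
        by (auto simp: F_def E0 intro!: sigma_sets.Basic)
      have F1: "F 1 \<in> sigma_sets (space M) (\<Union>i\<in>I 1. E i)" unfolding I1 using BS by (simp add: F_def)
      show "\<forall>j\<in>{0, 1}. F j \<in> sigma_sets (space M) (\<Union>i\<in>I j. E i)"
      proof
        fix j :: nat assume "j \<in> {0, 1}"
        hence "j = 0 \<or> j = 1" by simp
        thus "F j \<in> sigma_sets (space M) (\<Union>i\<in>I j. E i)" using F0 F1 by metis
      qed
    qed auto
    hence "prob ((X -` A \<inter> space M) \<inter> ((\<lambda>\<omega>. (Y \<omega>, Z \<omega>)) -` B \<inter> space M)) = prob (X -` A \<inter> space M) * prob ((\<lambda>\<omega>. (Y \<omega>, Z \<omega>)) -` B \<inter> space M)"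
      by (simp add: F_def Int_commute)
    moreover have "(\<lambda>\<omega>. (X \<omega>, (Y \<omega>, Z \<omega>))) -` (A \<times> B) \<inter> space M = (X -` A \<inter> space M) \<inter> ((\<lambda>\<omega>. (Y \<omega>, Z \<omega>)) -` B \<inter> space M)" by auto
    ultimately show "emeasure (distr M MX X) A * emeasure (distr M (MY \<Otimes>\<^sub>M MZ) (\<lambda>\<omega>. (Y \<omega>, Z \<omega>))) B = emeasure (distr M (MX \<Otimes>\<^sub>M (MY \<Otimes>\<^sub>M MZ)) (\<lambda>\<omega>. (X \<omega>, (Y \<omega>, Z \<omega>)))) (A \<times> B)"
      using A' B' by (simp add: emeasure_distr emeasure_eq_measure ennreal_mult[symmetric])
  qed
  show ?thesis using inner outer by simp
qed

lemma infsum_ennreal_cmult: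
  fixes c :: real and g :: "'b \<Rightarrow> real"
  assumes "c \<ge> 0"
  shows "infsum (\<lambda>p. ennreal (c * g p)) S = ennreal c * infsum (\<lambda>p. ennreal (g p)) S"
proof -
  have "infsum (\<lambda>p. ennreal (c * g p)) S = (SUP T\<in>{T. finite T \<and> T \<subseteq> S}. \<Sum>p\<in>T. ennreal (c * g p))"
    by (rule nonneg_infsum_complete) simp
  also have "\<dots> = (SUP T\<in>{T. finite T \<and> T \<subseteq> S}. ennreal c * (\<Sum>p\<in>T. ennreal (g p)))"
    using assms by (intro SUP_cong refl) (simp add: sum_distrib_left ennreal_mult')
  also have "\<dots> = ennreal c * (SUP T\<in>{T. finite T \<and> T \<subseteq> S}. \<Sum>p\<in>T. ennreal (g p))"
    by (rule SUP_mult_left_ennreal[symmetric])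
  also have "(SUP T\<in>{T. finite T \<and> T \<subseteq> S}. \<Sum>p\<in>T. ennreal (g p)) = infsum (\<lambda>p. ennreal (g p)) S"
    by (rule nonneg_infsum_complete[symmetric]) simp
  finally show ?thesis .
qed

lemma h_integral:
  fixes sig \<theta> :: real and I :: ennreal
  assumes sig: "sig > 0" and th: "\<theta> > 0"
  shows "(\<integral>\<^sup>+h. indicator {h. ennreal \<theta> * I \<le> ennreal (sig * h)} h \<partial>exp_distr 1) = EE (ennreal (\<theta> / sig) * I)"
proof (cases "I = \<top>")
  case True
  have "ennreal \<theta> * I = \<top>" using th True by (simp add: ennreal_mult_top)
  hence "{h. ennreal \<theta> * I \<le> ennreal (sig * h)} = {}" by (auto simp: top_unique)
  moreover have "ennreal (\<theta> / sig) * I = \<top>" using th sig True by (simp add: ennreal_mult_top)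
  ultimately show ?thesis by (simp add: EE_def)
next
  case False
  then obtain y where y: "I = ennreal y" "y \<ge> 0" by (cases I) auto
  have "(\<integral>\<^sup>+h. indicator {h. ennreal \<theta> * I \<le> ennreal (sig * h)} h \<partial>exp_distr 1)
      = (\<integral>\<^sup>+h. ennreal (exponential_density 1 h) * indicator {h. ennreal \<theta> * I \<le> ennreal (sig * h)} h \<partial>lborel)"
    unfolding exp_distr_def by (rule nn_integral_density) (auto simp: exponential_density_nonneg)
  also have "\<dots> = (\<integral>\<^sup>+h. ennreal (exponential_density 1 h) * indicator {\<theta> * y / sig..} h \<partial>lborel)"
  proof (rule nn_integral_cong)
    fix h :: real
    show "ennreal (exponential_density 1 h) * indicator {h. ennreal \<theta> * I \<le> ennreal (sig * h)} h
        = ennreal (exponential_density 1 h) * indicator {\<theta> * y / sig..} h"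
    proof (cases "h < 0")
      case True thus ?thesis by (simp add: exponential_density_def)
    next
      case False
      hence "ennreal \<theta> * I \<le> ennreal (sig * h) \<longleftrightarrow> \<theta> * y \<le> sig * h"
        using y th sig by (simp add: ennreal_mult'[symmetric] ennreal_le_iff)
      also have "\<dots> \<longleftrightarrow> \<theta> * y / sig \<le> h" using sig by (simp add: field_simps)
      finally show ?thesis by (simp add: indicator_def)
    qed
  qed
  also have "\<dots> = ennreal (exp (- (\<theta> * y / sig)))"
    using th sig y by (intro exp_tail) simp
  also have "\<dots> = EE (ennreal (\<theta> / sig) * I)"
    using th sig y by (simp add: EE_def ennreal_mult'[symmetric])
  finally show ?thesis .
qed

lemma sig_alg:
  fixes r cq \<theta> \<alpha> \<nu> :: real
  assumes r: "r > 0" and cq: "cq > 0" and th: "\<theta> > 0" and al: "\<alpha> > 0"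
  shows "(\<theta> / (cq * r powr (\<alpha> * \<nu>) * r powr (- \<alpha>))) powr (2 / \<alpha>) = (\<theta> / cq) powr (2 / \<alpha>) * (r\<^sup>2) powr (1 - \<nu>)"
proof -
  have "\<theta> / (cq * r powr (\<alpha> * \<nu>) * r powr (- \<alpha>)) = (\<theta> / cq) * r powr (\<alpha> - \<alpha> * \<nu>)"
    using r cq by (simp add: powr_minus powr_diff field_simps)
  hence "(\<theta> / (cq * r powr (\<alpha> * \<nu>) * r powr (- \<alpha>))) powr (2 / \<alpha>) = ((\<theta> / cq) * r powr (\<alpha> - \<alpha> * \<nu>)) powr (2 / \<alpha>)"
    by (rule arg_cong)
  also have "\<dots> = (\<theta> / cq) powr (2 / \<alpha>) * (r powr (\<alpha> - \<alpha> * \<nu>)) powr (2 / \<alpha>)"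
    using r cq th by (intro powr_mult)
  also have "(r powr (\<alpha> - \<alpha> * \<nu>)) powr (2 / \<alpha>) = r powr (2 * (1 - \<nu>))"
  proof -
    have "(\<alpha> - \<alpha> * \<nu>) * (2 / \<alpha>) = 2 * (1 - \<nu>)" using al by (simp add: field_simps)
    thus ?thesis by (simp add: powr_powr)
  qed
  also have "\<dots> = (r\<^sup>2) powr (1 - \<nu>)"
  proof -
    have "r\<^sup>2 = r powr 2" using r by (simp add: powr_realpow)
    hence "(r\<^sup>2) powr (1 - \<nu>) = r powr (2 * (1 - \<nu>))" by (simp add: powr_powr)
    thus ?thesis by simp
  qed
  finally show ?thesis .
qed

lemma final_subst:
  fixes l A B \<nu> :: real
  assumes l: "l > 0" and A: "A = B * l powr (1 - \<nu>)"
  shows "(\<integral>\<^sup>+s. ennreal (exponential_density l s) * ennreal (exp (- (A * s powr (1 - \<nu>)))) \<partial>lborel)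
       = (\<integral>\<^sup>+u. ennreal (indicator {0<..} u * exp (- (B * u powr (1 - \<nu>) + u))) \<partial>lborel)"
proof -
  have "(\<integral>\<^sup>+u. ennreal (indicator {0<..} u * exp (- (B * u powr (1 - \<nu>) + u))) \<partial>lborel)
      = ennreal \<bar>l\<bar> * (\<integral>\<^sup>+s. ennreal (indicator {0<..} (0 + l * s) * exp (- (B * (0 + l * s) powr (1 - \<nu>) + (0 + l * s)))) \<partial>lborel)"
    using l by (intro nn_integral_real_affine) auto
  also have "\<dots> = (\<integral>\<^sup>+s. ennreal l * ennreal (indicator {0<..} (0 + l * s) * exp (- (B * (0 + l * s) powr (1 - \<nu>) + (0 + l * s)))) \<partial>lborel)"
    by (subst abs_of_pos[OF l], rule nn_integral_cmult[symmetric]) measurable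
  also have "\<dots> = (\<integral>\<^sup>+s. ennreal (exponential_density l s) * ennreal (exp (- (A * s powr (1 - \<nu>)))) \<partial>lborel)"
  proof (rule nn_integral_cong_AE)
    show "AE s in lborel. ennreal l * ennreal (indicator {0<..} (0 + l * s) * exp (- (B * (0 + l * s) powr (1 - \<nu>) + (0 + l * s))))
        = ennreal (exponential_density l s) * ennreal (exp (- (A * s powr (1 - \<nu>))))"
      using AE_lborel_singleton[of 0]
    proof eventually_elim
      case (elim s)
      show ?case
      proof (cases "s > 0")
        case True
        have "(l * s) powr (1 - \<nu>) = l powr (1 - \<nu>) * s powr (1 - \<nu>)" using l True by (simp add: powr_mult)
        thus ?thesis using True l A
          by (simp add: exponential_density_def ennreal_mult'[symmetric] exp_add[symmetric] mult_ac)
      next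
        case False
        hence "s < 0" using elim by simp
        hence "l * s < 0" using l by (simp add: mult_pos_neg)
        thus ?thesis using \<open>s < 0\<close> by (simp add: exponential_density_def indicator_def)
      qed
    qed
  qed
  finally show ?thesis ..
qed

theorem mainTheorem4:
  fixes M :: "'w measure"
    and \<alpha> \<theta>c Qbar lmin lb lmax ld \<rho> \<eta>a \<nu> :: real
    and R1 H1 :: "'w \<Rightarrow> real"
    and \<Phi> :: "'w \<Rightarrow> ((real \<times> real) \<times> real \<times> real) set"
  assumes "prob_space M"
    and "\<alpha> > 2" and "\<theta>c > 0" and "Qbar > 0"
    and "0 < lmin" and "lmin \<le> lb" and "lb \<le> lmax"
    and "ld > 0" and "0 < \<rho>" and "\<rho> < 1" and "0 < \<eta>a" and "\<eta>a \<le> 1"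
    and "\<nu> > - 2 / \<alpha>"
    \<comment> \<open>distance of the desired transmitter: R1 \<ge> 0, R1^2 ~ Exp(pi lambda_b)\<close>
    and "R1 \<in> borel_measurable M" and "\<forall>\<omega>\<in>space M. R1 \<omega> \<ge> 0"
    and "distr M borel (\<lambda>\<omega>. (R1 \<omega>)\<^sup>2) = exp_distr (pi * lb)"
    \<comment> \<open>fading of the desired link: H1 ~ Exp(1)\<close>
    and "H1 \<in> borel_measurable M"
    and "distr M borel H1 = exp_distr 1"
    \<comment> \<open>interferers: independently marked PPP (location D_j, power Q_j, fading H_j)\<close>
    and "prob_space.poisson_point_process M
           (interferer_intensity (\<rho> * \<eta>a * ld) \<alpha> \<nu> Qbar lmin lmax lb) \<Phi>"
    \<comment> \<open>mutual independence of R1, H1 and the marked PPP\<close>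
    and "prob_space.indep_sets M
           (\<lambda>i::nat. if i = 0 then {R1 -` B \<inter> space M | B. B \<in> sets borel}
                     else if i = 1 then {H1 -` B \<inter> space M | B. B \<in> sets borel}
                     else {\<Phi> -` B \<inter> space M | B. B \<in> sets (ppp_space
                            (interferer_intensity (\<rho> * \<eta>a * ld) \<alpha> \<nu> Qbar lmin lmax lb))})
           {0, 1, 2}"
  shows "measure M {\<omega> \<in> space M.
            ennreal (Qpow \<alpha> \<nu> Qbar lmin lmax (R1 \<omega>) * H1 \<omega> * R1 \<omega> powr (- \<alpha>))
            \<ge> ennreal \<theta>c * (\<Sum>\<^sub>\<infinity>p\<in>\<Phi> \<omega>.
                 ennreal (fst (snd p) * snd (snd p) * norm (fst p) powr (- \<alpha>)))}
       = (let na = ld / lb * \<rho> * \<eta>a * \<theta>c powr (2 / \<alpha>) * Gamma (1 + 2 / \<alpha>) * Gamma (1 - 2 / \<alpha>)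
          in (\<integral>u\<in>{0<..}. exp (- (na * Gamma (1 + \<nu>) * u powr (1 - \<nu>) + u)) \<partial>lborel))"
proof -
  interpret prob_space M by fact
  note al = \<open>\<alpha> > 2\<close> and th = \<open>\<theta>c > 0\<close> and Qb = \<open>Qbar > 0\<close> and lmin = \<open>0 < lmin\<close>
  note nu = \<open>\<nu> > - 2 / \<alpha>\<close>
  note R1[measurable] = \<open>R1 \<in> borel_measurable M\<close> and H1[measurable] = \<open>H1 \<in> borel_measurable M\<close>
  note R1pos = \<open>\<forall>\<omega>\<in>space M. R1 \<omega> \<ge> 0\<close>
  note R1d = \<open>distr M borel (\<lambda>\<omega>. (R1 \<omega>)\<^sup>2) = exp_distr (pi * lb)\<close>
  note H1d = \<open>distr M borel H1 = exp_distr 1\<close>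
  note PPP = \<open>poisson_point_process (interferer_intensity (\<rho> * \<eta>a * ld) \<alpha> \<nu> Qbar lmin lmax lb) \<Phi>\<close>
  note ind = \<open>indep_sets (\<lambda>i::nat. if i = 0 then {R1 -` B \<inter> space M | B. B \<in> sets borel}
                     else if i = 1 then {H1 -` B \<inter> space M | B. B \<in> sets borel}
                     else {\<Phi> -` B \<inter> space M | B. B \<in> sets (ppp_space
                            (interferer_intensity (\<rho> * \<eta>a * ld) \<alpha> \<nu> Qbar lmin lmax lb))}) {0, 1, 2}\<close>
  have lb: "lb > 0" and lmax: "lmax > 0" using lmin \<open>lmin \<le> lb\<close> \<open>lb \<le> lmax\<close> by linarith+
  define lI where "lI = \<rho> * \<eta>a * ld"
  have lI: "lI > 0" unfolding lI_def using \<open>ld > 0\<close> \<open>0 < \<rho>\<close> \<open>0 < \<eta>a\<close> by simp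
  define \<mu> where "\<mu> = interferer_intensity lI \<alpha> \<nu> Qbar lmin lmax lb"
  define N where "N = ppp_space \<mu>"
  define cq where "cq = qconst \<alpha> \<nu> Qbar lmin lmax"
  have cq: "cq > 0" unfolding cq_def using qconst_pos al nu Qb lmin lmax by blast
  have "2 / \<alpha> < 1" using al by simp
  hence nu1: "\<nu> > -1" using nu by linarith
  define K where "K = lI * pi * Gamma (1 - 2 / \<alpha>) * Gamma (1 + 2 / \<alpha>) * cq powr (2 / \<alpha>) * (pi * lb) powr (- \<nu>) * Gamma (1 + \<nu>)"
  have G1: "Gamma (1 - 2 / \<alpha>) > 0" using al by (intro Gamma_real_pos) simp
  have G2: "Gamma (1 + 2 / \<alpha>) > 0" using al by (intro Gamma_real_pos) (simp add: add_pos_pos)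
  have G3: "Gamma (1 + \<nu>) > 0" using nu1 by (intro Gamma_real_pos) simp
  have K: "K \<ge> 0" unfolding K_def using lI G1 G2 G3 by simp
  define f where "f p = fst (snd p) * snd (snd p) * norm (fst p) powr (- \<alpha>)" for p :: "(real \<times> real) \<times> real \<times> real"
  define I where "I S = infsum (\<lambda>p. ennreal (f p)) S" for S
  have sp: "space \<mu> = UNIV"
    by (simp add: \<mu>_def interferer_intensity_def space_pair_measure Q_distr_def exp_distr_def)
  have gmeas: "(\<lambda>p. c * max 0 (f p)) \<in> borel_measurable \<mu>" for c
    unfolding \<mu>_def interferer_intensity_def f_def Q_distr_def exp_distr_def by measurable
  have PPP': "poisson_point_process \<mu> \<Phi>" using PPP by (simp add: \<mu>_def lI_def)
  have Ic: "infsum (\<lambda>p. ennreal (c * max 0 (f p))) S = ennreal c * I S" if "c \<ge> 0" for c S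
    using infsum_ennreal_cmult[OF that, of "\<lambda>p. max 0 (f p)" S] by (simp add: I_def ennreal_max_0)
  have Lc: "(\<integral>\<^sup>+p. ennreal (1 - exp (- (c * max 0 (f p)))) \<partial>\<mu>) = ennreal (c powr (2 / \<alpha>) * K)" if "c \<ge> 0" for c
    unfolding \<mu>_def f_def K_def cq_def using al nu Qb lmin lmax lb lI that
    by (intro intensity_laplace) auto
  have Imeas[measurable]: "I \<in> borel_measurable N"
    using ppp_laplace(1)[OF PPP' sp gmeas[of 1] _ Lc[of 1]] K Ic[of 1] by (simp add: N_def I_def[abs_def])
  have Lap: "(\<integral>\<^sup>+\<omega>. EE (ennreal c * I (\<Phi> \<omega>)) \<partial>M) = ennreal (exp (- (c powr (2 / \<alpha>) * K)))" if c: "c \<ge> 0" for c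
    using ppp_laplace(2)[OF PPP' sp gmeas[of c] _ Lc[OF c]] K c Ic[OF c] by simp
  have Phi_meas[measurable]: "\<Phi> \<in> measurable M N"
    using PPP' unfolding poisson_point_process_def N_def by simp
  define PR where "PR = distr M borel R1"
  define PH where "PH = exp_distr 1"
  define PP where "PP = distr M N \<Phi>"
  have JL: "distr M (borel \<Otimes>\<^sub>M (borel \<Otimes>\<^sub>M N)) (\<lambda>\<omega>. (R1 \<omega>, (H1 \<omega>, \<Phi> \<omega>))) = PR \<Otimes>\<^sub>M (PH \<Otimes>\<^sub>M PP)"
    unfolding PR_def PH_def PP_def H1d[symmetric]
  proof (rule joint_law3[OF R1 H1 Phi_meas])
    have Neq: "N = ppp_space (interferer_intensity (\<rho> * \<eta>a * ld) \<alpha> \<nu> Qbar lmin lmax lb)" by (simp add: N_def \<mu>_def lI_def)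
    show "indep_sets (\<lambda>i::nat. if i = 0 then {R1 -` B \<inter> space M | B. B \<in> sets borel}
                     else if i = 1 then {H1 -` B \<inter> space M | B. B \<in> sets borel}
                     else {\<Phi> -` B \<inter> space M | B. B \<in> sets N}) {0, 1, 2}"
      unfolding Neq by (rule ind)
  qed
  have PH_prob: "prob_space PH" unfolding PH_def exp_distr_def by (intro prob_space_exponential_density) simp
  have PP_prob: "prob_space PP" unfolding PP_def by (intro prob_space_distr) simp
  interpret HP: pair_prob_space PH PP using PH_prob PP_prob by (simp add: pair_prob_space_def pair_sigma_finite_def prob_space_imp_sigma_finite)
  have HP_sig: "sigma_finite_measure (PH \<Otimes>\<^sub>M PP)" by (rule prob_space_imp_sigma_finite[OF HP.prob_space_axioms])
  have HP_psf: "pair_sigma_finite PH PP" by (simp add: pair_sigma_finite_def prob_space_imp_sigma_finite PH_prob PP_prob)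
  have [measurable_cong]: "sets PH = sets borel" by (simp add: PH_def exp_distr_def)
  have [measurable_cong]: "sets PP = sets N" by (simp add: PP_def)
  have [measurable_cong]: "sets PR = sets borel" by (simp add: PR_def)
  define Psi where "Psi z = (indicator {z. ennreal \<theta>c * I (snd (snd z)) \<le> ennreal (Qpow \<alpha> \<nu> Qbar lmin lmax (fst z) * fst (snd z) * fst z powr (- \<alpha>))} z :: ennreal)"
    for z :: "real \<times> real \<times> ((real \<times> real) \<times> real \<times> real) set"
  have Psi_meas[measurable]: "Psi \<in> borel_measurable (borel \<Otimes>\<^sub>M (borel \<Otimes>\<^sub>M N))"
    unfolding Psi_def by measurable
  define E where "E = {\<omega> \<in> space M. ennreal (Qpow \<alpha> \<nu> Qbar lmin lmax (R1 \<omega>) * H1 \<omega> * R1 \<omega> powr (- \<alpha>))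
            \<ge> ennreal \<theta>c * (\<Sum>\<^sub>\<infinity>p\<in>\<Phi> \<omega>. ennreal (fst (snd p) * snd (snd p) * norm (fst p) powr (- \<alpha>)))}"
  have E_eq: "E = {\<omega> \<in> space M. ennreal \<theta>c * I (\<Phi> \<omega>) \<le> ennreal (Qpow \<alpha> \<nu> Qbar lmin lmax (R1 \<omega>) * H1 \<omega> * R1 \<omega> powr (- \<alpha>))}"
    by (simp add: E_def I_def f_def)
  have E_meas[measurable]: "E \<in> sets M" unfolding E_eq by measurable
  define J where "J r = (\<integral>\<^sup>+y. Psi (r, y) \<partial>(PH \<Otimes>\<^sub>M PP))" for r
  have J_meas[measurable]: "J \<in> borel_measurable borel"
    unfolding J_def by (rule sigma_finite_measure.borel_measurable_nn_integral[OF HP_sig]) measurable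
  define A where "A = (\<theta>c / cq) powr (2 / \<alpha>) * K"
  define k2 where "k2 s = ennreal (exp (- (A * s powr (1 - \<nu>))))" for s :: real
  have J_eq: "J r = k2 (r\<^sup>2)" if r: "r > 0" for r
  proof -
    define sig where "sig = Qpow \<alpha> \<nu> Qbar lmin lmax r * r powr (- \<alpha>)"
    have sig_eq: "sig = cq * r powr (\<alpha> * \<nu>) * r powr (- \<alpha>)" by (simp add: sig_def Qpow_eq cq_def)
    have sig: "sig > 0" using cq r by (simp add: sig_eq)
    have "J r = (\<integral>\<^sup>+S. (\<integral>\<^sup>+h. Psi (r, (h, S)) \<partial>PH) \<partial>PP)"
      unfolding J_def by (rule pair_sigma_finite.nn_integral_snd[OF HP_psf, symmetric]) measurable
    also have "\<dots> = (\<integral>\<^sup>+S. EE (ennreal (\<theta>c / sig) * I S) \<partial>PP)"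
    proof (rule nn_integral_cong)
      fix S
      have "(\<integral>\<^sup>+h. Psi (r, (h, S)) \<partial>PH) = (\<integral>\<^sup>+h. indicator {h. ennreal \<theta>c * I S \<le> ennreal (sig * h)} h \<partial>exp_distr 1)"
        unfolding PH_def Psi_def sig_def by (intro nn_integral_cong) (simp add: indicator_def mult_ac)
      also have "\<dots> = EE (ennreal (\<theta>c / sig) * I S)" using sig th by (rule h_integral)
      finally show "(\<integral>\<^sup>+h. Psi (r, (h, S)) \<partial>PH) = EE (ennreal (\<theta>c / sig) * I S)" .
    qed
    also have "\<dots> = (\<integral>\<^sup>+\<omega>. EE (ennreal (\<theta>c / sig) * I (\<Phi> \<omega>)) \<partial>M)"
      unfolding PP_def by (rule nn_integral_distr) measurable
    also have "\<dots> = ennreal (exp (- ((\<theta>c / sig) powr (2 / \<alpha>) * K)))"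
      using sig th by (intro Lap) simp
    also have "(\<theta>c / sig) powr (2 / \<alpha>) = (\<theta>c / cq) powr (2 / \<alpha>) * (r\<^sup>2) powr (1 - \<nu>)"
      unfolding sig_eq using r cq th al by (intro sig_alg) auto
    finally show ?thesis by (simp add: k2_def A_def mult_ac)
  qed
  have AE_pos: "AE \<omega> in M. R1 \<omega> > 0"
  proof -
    have "AE s in exp_distr (pi * lb). s \<noteq> 0"
      unfolding exp_distr_def using AE_lborel_singleton[of 0] by (subst AE_density) (auto elim: eventually_mono)
    hence "AE s in distr M borel (\<lambda>\<omega>. (R1 \<omega>)\<^sup>2). s \<noteq> 0" unfolding R1d .
    hence "AE \<omega> in M. (R1 \<omega>)\<^sup>2 \<noteq> 0" by (subst (asm) AE_distr_iff) auto
    thus ?thesis using R1pos by (auto elim!: eventually_mono simp: less_le)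
  qed
  have "emeasure M E = (\<integral>\<^sup>+\<omega>. Psi (R1 \<omega>, (H1 \<omega>, \<Phi> \<omega>)) \<partial>M)"
    by (subst nn_integral_indicator[symmetric, OF E_meas], intro nn_integral_cong) (simp add: E_eq Psi_def indicator_def)
  also have "\<dots> = (\<integral>\<^sup>+z. Psi z \<partial>distr M (borel \<Otimes>\<^sub>M (borel \<Otimes>\<^sub>M N)) (\<lambda>\<omega>. (R1 \<omega>, (H1 \<omega>, \<Phi> \<omega>))))"
    by (rule nn_integral_distr[symmetric]) measurable
  also have "\<dots> = (\<integral>\<^sup>+z. Psi z \<partial>(PR \<Otimes>\<^sub>M (PH \<Otimes>\<^sub>M PP)))" by (simp add: JL)
  also have "\<dots> = (\<integral>\<^sup>+r. J r \<partial>PR)"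
    unfolding J_def by (rule sigma_finite_measure.nn_integral_fst[OF HP_sig, symmetric]) measurable
  also have "\<dots> = (\<integral>\<^sup>+\<omega>. J (R1 \<omega>) \<partial>M)"
    unfolding PR_def by (rule nn_integral_distr) measurable
  also have "\<dots> = (\<integral>\<^sup>+\<omega>. k2 ((R1 \<omega>)\<^sup>2) \<partial>M)"
    using AE_pos by (intro nn_integral_cong_AE) (auto elim!: eventually_mono simp: J_eq)
  also have "\<dots> = (\<integral>\<^sup>+s. k2 s \<partial>distr M borel (\<lambda>\<omega>. (R1 \<omega>)\<^sup>2))"
    by (rule nn_integral_distr[symmetric]) (auto simp: k2_def)
  also have "\<dots> = (\<integral>\<^sup>+s. ennreal (exponential_density (pi * lb) s) * k2 s \<partial>lborel)"
    unfolding R1d exp_distr_def by (rule nn_integral_density) (auto simp: k2_def exponential_density_nonneg lb)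
  finally have chain: "emeasure M E = (\<integral>\<^sup>+s. ennreal (exponential_density (pi * lb) s) * k2 s \<partial>lborel)" .
  define B where "B = (ld / lb * \<rho> * \<eta>a * \<theta>c powr (2 / \<alpha>) * Gamma (1 + 2 / \<alpha>) * Gamma (1 - 2 / \<alpha>)) * Gamma (1 + \<nu>)"
  have AB: "A = B * (pi * lb) powr (1 - \<nu>)"
  proof -
    have "(\<theta>c / cq) powr (2 / \<alpha>) * cq powr (2 / \<alpha>) = \<theta>c powr (2 / \<alpha>)"
      using th cq by (simp add: powr_divide)
    moreover have "(pi * lb) powr (1 - \<nu>) = (pi * lb) * (pi * lb) powr (- \<nu>)"
      using lb by (simp add: powr_diff powr_minus field_simps)
    ultimately show ?thesis
      unfolding A_def B_def K_def lI_def using lb by (simp add: field_simps)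
  qed
  define T where "T u = indicator {0<..} u * exp (- (B * u powr (1 - \<nu>) + u))" for u :: real
  have T0: "T u \<ge> 0" for u by (simp add: T_def)
  have T_meas[measurable]: "T \<in> borel_measurable lborel" unfolding T_def by measurable
  have "emeasure M E = (\<integral>\<^sup>+u. ennreal (T u) \<partial>lborel)"
    unfolding chain k2_def T_def using lb by (intro final_subst AB) simp
  hence nnT: "(\<integral>\<^sup>+u. ennreal (T u) \<partial>lborel) = emeasure M E" ..
  have intT: "integrable lborel T"
    by (rule integrableI_nonneg) (use T0 nnT in \<open>auto simp: less_top[symmetric]\<close>)
  have "emeasure M E = ennreal (integral\<^sup>L lborel T)"
    using nn_integral_eq_integral[OF intT] T0 nnT by simp
  hence "measure M E = integral\<^sup>L lborel T"
    using T0 by (simp add: measure_def integral_nonneg)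
  also have "integral\<^sup>L lborel T = (let na = ld / lb * \<rho> * \<eta>a * \<theta>c powr (2 / \<alpha>) * Gamma (1 + 2 / \<alpha>) * Gamma (1 - 2 / \<alpha>)
          in (\<integral>u\<in>{0<..}. exp (- (na * Gamma (1 + \<nu>) * u powr (1 - \<nu>) + u)) \<partial>lborel))"
    unfolding T_def[abs_def] B_def Let_def set_lebesgue_integral_def by simp
  finally show ?thesis unfolding E_def .
qed

end
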